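(* Let $H\le\mathrm{SL}_2(\mathbb Z)$ be a subgroup, $\rho:\widetilde H\to\mathrm{GL}(\mathcal W)$ a representation, $B$ a real symmetric bilinear form on a real vector space $V$ of dimension $\mathfrak n$, $\mathfrak B$ an $\mathbb R$-basis of $V$ with Gram matrix $G_{\mathfrak B}$, and $k\in\frac12\mathbb Z$ with $k\notin\{0,-1,-2,\dots\}$. Then the map $\sum_{\mathbf j}h_{\mathbf j}T^{\mathbf j}\mapsto(D_{k,\mathbf p}\sum_{\mathbf j}h_{\mathbf j}T^{\mathbf j})_{\mathbf p\in\mathbb Z_{\ge0}^{\mathfrak n}}$ is a $\mathbb C$-linear isomorphism from the space of formal series $\sum_{\mathbf j\in\mathbb Z_{\ge0}^{\mathfrak n}}h_{\mathbf j}T^{\mathbf j}$ (with $h_{\mathbf j}:\mathbb H\to\mathcal W$ holomorphic) which transform like modular forms of weight $k$ under $H$ with representation $\rho$, onto $\prod_{\mathbf p\in\mathbb Z_{\ge0}^{\mathfrak n}}\mathrm{Hol}_{k+s(\mathbf p)}(H,\rho)$, where $\mathrm{Hol}_{k'}(H,\rho)$ is the space of holomorphic $g:\mathbb H\to\mathcal W$ with $(\varepsilon\sqrt{c\tau+d})^{-2k'}g(\gamma\tau)=\rho(\gamma,\varepsilon\sqrt{c\tau+d})g(\tau)$ for all $(\gamma,\varepsilon\sqrt{c\tau+d})\in\widetilde H$ (no condition at cusps).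
   Context: $T=(T_1,\dots,T_{\mathfrak n})$ are formal variables, $T^{\mathbf j}=\prod T_i^{j_i}$; formal series $\sum h_{\mathbf j}T^{\mathbf j}$ are set to have $h_{\mathbf j}=0$ for $\mathbf j\notin\mathbb Z_{\ge0}^{\mathfrak n}$. Metaplectic group $\widetilde{\mathrm{SL}_2(\mathbb R)}$: pairs $(\gamma,\varepsilon\sqrt{c\tau+d})$ with $\gamma=\begin{pmatrix}a&b\\c&d\end{pmatrix}$, $\varepsilon=\pm1$, principal branch, product $(\gamma_1,\phi_1)(\gamma_2,\phi_2)=(\gamma_1\gamma_2,\phi_1(\gamma_2\tau)\phi_2(\tau))$; $\widetilde H$ is the preimage of $H$. For $\Lambda=(\lambda_{ij})\in M_{\mathfrak n}(\mathbb Z_{\ge0})$: $s(\Lambda)=\sum\lambda_{ij}$, $\Lambda!=\prod\lambda_{ij}!$, $\pi(\Lambda)\in\mathbb Z^{\mathfrak n}$ with $\pi(\Lambda)_i=\sum_j\lambda_{ij}+\sum_j\lambda_{ji}$, $M^\Lambda=\prod m_{ij}^{\lambda_{ij}}$ ($0^0=1$); $s(\mathbf p)=\sum p_i$. Slash on formal series: $(\sum h_{\mathbf j}T^{\mathbf j})|^{\mathfrak B}_{k,B}(\gamma,\varepsilon\sqrt{c\tau+d})=\sum_{\mathbf p}g_{\mathbf p}T^{\mathbf p}$ with $g_{\mathbf p}(\tau)=\varepsilon^{-2k}\sum_{\Lambda}\frac{(-\pi icG_{\mathfrak B})^\Lambda}{\Lambda!}(c\tau+d)^{-(k+s(\mathbf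 p)-s(\Lambda))}h_{\mathbf p-\pi(\Lambda)}(\frac{a\tau+b}{c\tau+d})$ (powers of $c\tau+d$ via the principal branch). The series transforms like a modular form of weight $k$ under $H$ with representation $\rho$ if $(\sum h_{\mathbf j}T^{\mathbf j})|^{\mathfrak B}_{k,B}\gamma=\sum\rho(\gamma)\circ h_{\mathbf j}T^{\mathbf j}$ for all $\gamma\in\widetilde H$. Operator: for $\mathbf p\in\mathbb Z_{\ge0}^{\mathfrak n}$, $\lambda=[s(\mathbf p)/2]$, $\lambda'=[(s(\mathbf p)-1)/2]$, $D_{k,\mathbf p}(\sum h_{\mathbf j}T^{\mathbf j})=4^\lambda\lambda!\sum_{s(\Lambda)\le\lambda}\frac{(-\pi iG_{\mathfrak B})^\Lambda}{\Lambda!}\big(\prod_{m=\lambda'}^{s(\mathbf p)-2-s(\Lambda)}(k+m)\big)\frac{d^{s(\Lambda)}}{d\tau^{s(\Lambda)}}h_{\mathbf p-\pi(\Lambda)}$ (empty product $=1$). *)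

theory Defs
  imports "HOL-Complex_Analysis.Complex_Analysis"
begin

text \<open>A 2x2 integer matrix (a,b,c,d) stands for [[a,b],[c,d]].\<close>
type_synonym mat2 = "int \<times> int \<times> int \<times> int"
text \<open>A metaplectic element (gamma, e) stands for (gamma, e*sqrt(c tau + d)), e = 1 or -1.\<close>
type_synonym mpel = "mat2 \<times> int"

definition uhp :: "complex set" where
  "uhp = {\<tau>. Im \<tau> > 0}"

fun mob :: "mat2 \<Rightarrow> complex \<Rightarrow> complex" where
  "mob (a, b, c, d) \<tau> = (of_int a * \<tau> + of_int b) / (of_int c * \<tau> + of_int d)"

fun mat2_mult :: "mat2 \<Rightarrow> mat2 \<Rightarrow> mat2" where
  "mat2_mult (a, b, c, d) (a', b', c', d') =
     (a*a' + b*c', a*b' + b*d', c*a' + d*c', c*b' + d*d')"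

fun mat2_det :: "mat2 \<Rightarrow> int" where
  "mat2_det (a, b, c, d) = a*d - b*c"

fun mat2_inv :: "mat2 \<Rightarrow> mat2" where
  "mat2_inv (a, b, c, d) = (d, -b, -c, a)"

definition is_sl2z_subgroup :: "mat2 set \<Rightarrow> bool" where
  "is_sl2z_subgroup H \<longleftrightarrow> (\<forall>g\<in>H. mat2_det g = 1) \<and> (1, 0, 0, 1) \<in> H \<and>
     (\<forall>g\<in>H. \<forall>h\<in>H. mat2_mult g h \<in> H) \<and> (\<forall>g\<in>H. mat2_inv g \<in> H)"

fun mp_phi :: "mpel \<Rightarrow> complex \<Rightarrow> complex" where
  "mp_phi ((a, b, c, d), e) \<tau> = of_int e * csqrt (of_int c * \<tau> + of_int d)"

definition mp_lift :: "mat2 set \<Rightarrow> mpel set" where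
  "mp_lift H = {(\<gamma>, e). \<gamma> \<in> H \<and> (e = 1 \<or> e = -1)}"

text \<open>Product (g1,phi1)(g2,phi2) = (g1 g2, phi1(g2 tau) phi2(tau)).\<close>
definition mp_mult :: "mpel \<Rightarrow> mpel \<Rightarrow> mpel" where
  "mp_mult g1 g2 = (let \<gamma>3 = mat2_mult (fst g1) (fst g2) in
     (\<gamma>3, THE e. (e = 1 \<or> e = -1) \<and>
        (\<forall>\<tau>\<in>uhp. mp_phi g1 (mob (fst g2) \<tau>) * mp_phi g2 \<tau> = mp_phi (\<gamma>3, e) \<tau>)))"

definition is_rep :: "mat2 set \<Rightarrow> (mpel \<Rightarrow> complex^'m^'m) \<Rightarrow> bool" where
  "is_rep H \<rho> \<longleftrightarrow> (\<forall>g\<in>mp_lift H. invertible (\<rho> g)) \<and>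
     (\<forall>g1\<in>mp_lift H. \<forall>g2\<in>mp_lift H. \<rho> (mp_mult g1 g2) = \<rho> g1 ** \<rho> g2)"

definition midx :: "nat \<Rightarrow> (nat \<Rightarrow> nat) set" where
  "midx n = {j. \<forall>i\<ge>n. j i = 0}"

definition sidx :: "nat \<Rightarrow> (nat \<Rightarrow> nat) \<Rightarrow> nat" where
  "sidx n p = (\<Sum>i<n. p i)"

definition smat :: "nat \<Rightarrow> (nat \<Rightarrow> nat \<Rightarrow> nat) \<Rightarrow> nat" where
  "smat n \<Lambda> = (\<Sum>i<n. \<Sum>j<n. \<Lambda> i j)"

definition mats :: "nat \<Rightarrow> nat \<Rightarrow> (nat \<Rightarrow> nat \<Rightarrow> nat) set" where
  "mats n N = {\<Lambda>. (\<forall>i j. n \<le> i \<or> n \<le> j \<longrightarrow> \<Lambda> i j = 0) \<and> smat n \<Lambda> \<le> N}"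

definition piL :: "nat \<Rightarrow> (nat \<Rightarrow> nat \<Rightarrow> nat) \<Rightarrow> nat \<Rightarrow> nat" where
  "piL n \<Lambda> = (\<lambda>i. if i < n then (\<Sum>j<n. \<Lambda> i j) + (\<Sum>j<n. \<Lambda> j i) else 0)"

definition factL :: "nat \<Rightarrow> (nat \<Rightarrow> nat \<Rightarrow> nat) \<Rightarrow> complex" where
  "factL n \<Lambda> = (\<Prod>i<n. \<Prod>j<n. fact (\<Lambda> i j))"

definition powL :: "nat \<Rightarrow> (nat \<Rightarrow> nat \<Rightarrow> complex) \<Rightarrow> (nat \<Rightarrow> nat \<Rightarrow> nat) \<Rightarrow> complex" where
  "powL n M \<Lambda> = (\<Prod>i<n. \<Prod>j<n. M i j ^ \<Lambda> i j)"

text \<open>h_{p - q}, with the convention h_j = 0 if j has a negative entry.\<close>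
definition coeff_sub :: "((nat \<Rightarrow> nat) \<Rightarrow> complex \<Rightarrow> complex^'m) \<Rightarrow> (nat \<Rightarrow> nat) \<Rightarrow> (nat \<Rightarrow> nat)
    \<Rightarrow> complex \<Rightarrow> complex^'m" where
  "coeff_sub h p q = (if \<forall>i. q i \<le> p i then h (\<lambda>i. p i - q i) else (\<lambda>_. 0))"

definition hol_vec :: "(complex \<Rightarrow> complex^'m) \<Rightarrow> complex set \<Rightarrow> bool" where
  "hol_vec f S \<longleftrightarrow> (\<forall>i. (\<lambda>\<tau>. f \<tau> $ i) holomorphic_on S)"

definition vderiv :: "(complex \<Rightarrow> complex^'m) \<Rightarrow> complex \<Rightarrow> complex^'m" where
  "vderiv f = (\<lambda>\<tau>. \<chi> i. deriv (\<lambda>z. f z $ i) \<tau>)"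

text \<open>Coefficient g_p(tau) of the slashed series; G is the Gram matrix.\<close>
definition slash_coeff :: "nat \<Rightarrow> (nat \<Rightarrow> nat \<Rightarrow> real) \<Rightarrow> real \<Rightarrow>
    ((nat \<Rightarrow> nat) \<Rightarrow> complex \<Rightarrow> complex^'m) \<Rightarrow> mpel \<Rightarrow> (nat \<Rightarrow> nat) \<Rightarrow> complex \<Rightarrow> complex^'m" where
  "slash_coeff n G k h g p \<tau> =
     (case g of ((a, b, c, d), e) \<Rightarrow>
       (of_int e) powr (complex_of_real (- 2 * k)) *s
       (\<Sum>\<Lambda>\<in>mats n (sidx n p).
          (powL n (\<lambda>i j. - of_real pi * \<i> * of_int c * of_real (G i j)) \<Lambda> / factL n \<Lambda>
           * (of_int c * \<tau> + of_int d) powr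
               (- (of_real k + of_nat (sidx n p) - of_nat (smat n \<Lambda>))))
          *s coeff_sub h p (piL n \<Lambda>) (mob (a, b, c, d) \<tau>)))"

definition transforms :: "nat \<Rightarrow> (nat \<Rightarrow> nat \<Rightarrow> real) \<Rightarrow> real \<Rightarrow> mat2 set \<Rightarrow>
    (mpel \<Rightarrow> complex^'m^'m) \<Rightarrow> ((nat \<Rightarrow> nat) \<Rightarrow> complex \<Rightarrow> complex^'m) \<Rightarrow> bool" where
  "transforms n G k H \<rho> h \<longleftrightarrow>
     (\<forall>g\<in>mp_lift H. \<forall>p\<in>midx n. \<forall>\<tau>\<in>uhp. slash_coeff n G k h g p \<tau> = \<rho> g *v h p \<tau>)"

text \<open>Formal series with holomorphic coefficients on the upper half-plane (functions are
  normalised to be 0 off the upper half-plane and off the valid multi-indices).\<close>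
definition series_space :: "nat \<Rightarrow> (nat \<Rightarrow> nat \<Rightarrow> real) \<Rightarrow> real \<Rightarrow> mat2 set \<Rightarrow>
    (mpel \<Rightarrow> complex^'m^'m) \<Rightarrow> ((nat \<Rightarrow> nat) \<Rightarrow> complex \<Rightarrow> complex^'m) set" where
  "series_space n G k H \<rho> = {h.
     (\<forall>j. hol_vec (h j) uhp) \<and> (\<forall>j. \<forall>\<tau>. \<tau> \<notin> uhp \<longrightarrow> h j \<tau> = 0) \<and>
     (\<forall>j. j \<notin> midx n \<longrightarrow> h j = (\<lambda>_. 0)) \<and> transforms n G k H \<rho> h}"

text \<open>Hol_{k'}(H, rho) (no condition at the cusps).\<close>
definition Hol :: "real \<Rightarrow> mat2 set \<Rightarrow> (mpel \<Rightarrow> complex^'m^'m) \<Rightarrow> (complex \<Rightarrow> complex^'m) set" where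
  "Hol k' H \<rho> = {g. hol_vec g uhp \<and> (\<forall>\<tau>. \<tau> \<notin> uhp \<longrightarrow> g \<tau> = 0) \<and>
     (\<forall>ge\<in>mp_lift H. \<forall>\<tau>\<in>uhp.
        (mp_phi ge \<tau>) powr (complex_of_real (- 2 * k')) *s g (mob (fst ge) \<tau>) = \<rho> ge *v g \<tau>)}"

definition prod_space :: "nat \<Rightarrow> real \<Rightarrow> mat2 set \<Rightarrow> (mpel \<Rightarrow> complex^'m^'m) \<Rightarrow>
    ((nat \<Rightarrow> nat) \<Rightarrow> complex \<Rightarrow> complex^'m) set" where
  "prod_space n k H \<rho> = {g. \<forall>p. (p \<in> midx n \<longrightarrow> g p \<in> Hol (k + real (sidx n p)) H \<rho>) \<and>
                                  (p \<notin> midx n \<longrightarrow> g p = (\<lambda>_. 0))}"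

definition Dop :: "nat \<Rightarrow> (nat \<Rightarrow> nat \<Rightarrow> real) \<Rightarrow> real \<Rightarrow> (nat \<Rightarrow> nat) \<Rightarrow>
    ((nat \<Rightarrow> nat) \<Rightarrow> complex \<Rightarrow> complex^'m) \<Rightarrow> complex \<Rightarrow> complex^'m" where
  "Dop n G k p h \<tau> =
     (let sp = sidx n p; l = sp div 2; l' = (int sp - 1) div 2 in
      (4 ^ l * fact l) *s
      (\<Sum>\<Lambda>\<in>mats n l.
         (powL n (\<lambda>i j. - of_real pi * \<i> * of_real (G i j)) \<Lambda> / factL n \<Lambda>
          * (\<Prod>m\<in>{l'..int sp - 2 - int (smat n \<Lambda>)}. of_real k + of_int m))
         *s ((vderiv ^^ smat n \<Lambda>) (coeff_sub h p (piL n \<Lambda>)) \<tau>)))"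

definition Dmap :: "nat \<Rightarrow> (nat \<Rightarrow> nat \<Rightarrow> real) \<Rightarrow> real \<Rightarrow>
    ((nat \<Rightarrow> nat) \<Rightarrow> complex \<Rightarrow> complex^'m) \<Rightarrow> (nat \<Rightarrow> nat) \<Rightarrow> complex \<Rightarrow> complex^'m" where
  "Dmap n G k h = (\<lambda>p \<tau>. if p \<in> midx n \<and> \<tau> \<in> uhp then Dop n G k p h \<tau> else 0)"

end

theory Submission
  imports Defs "HOL-Library.FuncSet" "HOL-Computational_Algebra.Polynomial"
begin

definition below :: "(nat \<Rightarrow> nat \<Rightarrow> nat) \<Rightarrow> (nat \<Rightarrow> nat \<Rightarrow> nat) set" where
  "below N = {\<Lambda>. \<forall>i j. \<Lambda> i j \<le> N i j}"

definition zout :: "nat \<Rightarrow> (nat \<Rightarrow> nat \<Rightarrow> nat) \<Rightarrow> bool" where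
  "zout n \<Lambda> \<longleftrightarrow> (\<forall>i j. n \<le> i \<or> n \<le> j \<longrightarrow> \<Lambda> i j = 0)"

definition emb :: "nat \<Rightarrow> (nat \<times> nat \<Rightarrow> nat) \<Rightarrow> nat \<Rightarrow> nat \<Rightarrow> nat" where
  "emb n g = (\<lambda>i j. if i < n \<and> j < n then g (i, j) else 0)"

lemma smat_cart: "smat n \<Lambda> = (\<Sum>e\<in>{..<n}\<times>{..<n}. case_prod \<Lambda> e)"
  unfolding smat_def by (simp add: sum.cartesian_product)

lemma entry_le_smat: "i < n \<Longrightarrow> j < n \<Longrightarrow> \<Lambda> i j \<le> smat n \<Lambda>"
proof -
  assume a: "i < n" "j < n"
  have "\<Lambda> i j \<le> (\<Sum>j'<n. \<Lambda> i j')" using a by (intro member_le_sum) auto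
  also have "\<dots> \<le> smat n \<Lambda>" unfolding smat_def using a
    by (intro member_le_sum[where f="\<lambda>i. \<Sum>j<n. \<Lambda> i j"]) auto
  finally show ?thesis .
qed

lemma mats_sub_img: "mats n M \<subseteq> emb n ` PiE ({..<n}\<times>{..<n}) (\<lambda>_. {..M})"
proof
  fix \<Lambda> assume L: "\<Lambda> \<in> mats n M"
  let ?g = "restrict (case_prod \<Lambda>) ({..<n}\<times>{..<n})"
  have "?g \<in> PiE ({..<n}\<times>{..<n}) (\<lambda>_. {..M})"
    using L entry_le_smat[of _ n _ \<Lambda>] by (auto simp: mats_def intro: order.trans)
  moreover have "\<Lambda> = emb n ?g" using L by (auto simp: emb_def mats_def fun_eq_iff)
  ultimately show "\<Lambda> \<in> emb n ` PiE ({..<n}\<times>{..<n}) (\<lambda>_. {..M})" by blast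
qed

lemma finite_mats: "finite (mats n M)"
  by (rule finite_subset[OF mats_sub_img]) (auto intro: finite_PiE)

lemma below_sub_mats: "zout n N \<Longrightarrow> below N \<subseteq> mats n (smat n N)"
  unfolding below_def mats_def zout_def smat_def
  by (auto intro!: sum_mono) (metis le_zero_eq)+

lemma finite_below: "zout n N \<Longrightarrow> finite (below N)"
  using below_sub_mats finite_mats finite_subset by blast

lemma zout_mats: "\<Lambda> \<in> mats n M \<Longrightarrow> zout n \<Lambda>" by (simp add: mats_def zout_def)

lemma piL_add: "piL n (\<lambda>i j. A i j + B i j) = (\<lambda>i. piL n A i + piL n B i)"
  by (auto simp: piL_def sum.distrib fun_eq_iff)

lemma smat_add: "smat n (\<lambda>i j. A i j + B i j) = smat n A + smat n B"
  by (simp add: smat_def sum.distrib)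

lemma sidx_piL: "sidx n (piL n \<Lambda>) = 2 * smat n \<Lambda>"
proof -
  have "sidx n (piL n \<Lambda>) = (\<Sum>i<n. \<Sum>j<n. \<Lambda> i j) + (\<Sum>i<n. \<Sum>j<n. \<Lambda> j i)"
    by (simp add: sidx_def piL_def sum.distrib)
  also have "(\<Sum>i<n. \<Sum>j<n. \<Lambda> j i) = (\<Sum>i<n. \<Sum>j<n. \<Lambda> i j)" by (rule sum.swap)
  finally show ?thesis by (simp add: smat_def)
qed

lemma sidx_sub: "\<forall>i. q i \<le> p i \<Longrightarrow> sidx n (\<lambda>i. p i - q i) = sidx n p - sidx n q"
  unfolding sidx_def by (simp add: sum_subtractf_nat)

lemma sidx_mono: "\<forall>i. q i \<le> p i \<Longrightarrow> sidx n q \<le> sidx n p"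
  unfolding sidx_def by (simp add: sum_mono)

lemma smat_le_half: "\<forall>i. piL n \<Lambda> i \<le> p i \<Longrightarrow> smat n \<Lambda> \<le> sidx n p div 2"
  using sidx_mono[of "piL n \<Lambda>" p n] sidx_piL[of n \<Lambda>] by simp

lemma midx_sub: "p \<in> midx n \<Longrightarrow> (\<lambda>i. p i - q i) \<in> midx n"
  by (simp add: midx_def)

lemma smat_pos: "zout n \<Lambda> \<Longrightarrow> \<Lambda> \<noteq> (\<lambda>i j. 0) \<Longrightarrow> 0 < smat n \<Lambda>"
proof (rule ccontr)
  assume z: "zout n \<Lambda>" and nz: "\<Lambda> \<noteq> (\<lambda>i j. 0)" and "\<not> 0 < smat n \<Lambda>"
  hence s0: "smat n \<Lambda> = 0" by simp
  from nz obtain i j where ij: "\<Lambda> i j \<noteq> 0" by (auto simp: fun_eq_iff)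
  with z have "i < n" "j < n" unfolding zout_def by (meson not_le)+
  with entry_le_smat[of i n j \<Lambda>] s0 ij show False by simp
qed

lemma sidx_sub_less: "p \<in> midx n \<Longrightarrow> \<forall>i. piL n \<Lambda> i \<le> p i \<Longrightarrow> zout n \<Lambda> \<Longrightarrow> \<Lambda> \<noteq> (\<lambda>i j. 0)
   \<Longrightarrow> sidx n (\<lambda>i. p i - piL n \<Lambda> i) < sidx n p"
  using sidx_sub[of "piL n \<Lambda>" p n] sidx_piL[of n \<Lambda>] smat_pos[of n \<Lambda>] sidx_mono[of "piL n \<Lambda>" p n]
  by simp

definition wt :: "nat \<Rightarrow> (nat \<Rightarrow> nat \<Rightarrow> complex) \<Rightarrow> (nat \<Rightarrow> nat \<Rightarrow> nat) \<Rightarrow> complex" where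
  "wt n x \<Lambda> = powL n x \<Lambda> / factL n \<Lambda>"

lemma wt_cart: "wt n x \<Lambda> = (\<Prod>e\<in>{..<n}\<times>{..<n}. case_prod x e ^ case_prod \<Lambda> e / fact (case_prod \<Lambda> e))"
  unfolding wt_def powL_def factL_def
  by (simp add: prod.cartesian_product prod_dividef split_def)

lemma prod_monom: "finite A \<Longrightarrow> (\<Prod>e\<in>A. monom (a e) (g e)) = monom (\<Prod>e\<in>A. a e) (\<Sum>e\<in>A. g e)"
  by (induction A rule: finite_induct) (auto simp: mult_monom)

lemma binom_factor:
  fixes x :: complex
  shows "(\<Sum>l\<le>m. monom (x ^ l / fact l * (x ^ (m - l) / fact (m - l))) l) = smult (x ^ m / fact m) ([:1, 1:] ^ m)"
proof (rule poly_eqI)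
  fix t
  show "coeff (\<Sum>l\<le>m. monom (x ^ l / fact l * (x ^ (m - l) / fact (m - l))) l) t =
        coeff (smult (x ^ m / fact m) ([:1, 1:] ^ m)) t"
  proof (cases "t \<le> m")
    case True
    have "coeff (\<Sum>l\<le>m. monom (x ^ l / fact l * (x ^ (m - l) / fact (m - l))) l) t
          = x ^ t / fact t * (x ^ (m - t) / fact (m - t))"
      using True by (simp add: coeff_sum coeff_monom)
    also have "\<dots> = x ^ m / fact m * of_nat (m choose t)"
      using True by (simp add: binomial_fact power_add[symmetric] field_simps)
    finally show ?thesis using True by (simp add: coeff_linear_poly_power)
  next
    case False
    have "degree ([:1, 1:] ^ m :: complex poly) \<le> m"
      by (metis degree_linear_power order.refl)
    hence "coeff ([:1, 1:] ^ m :: complex poly) t = 0" using False by (intro coeff_eq_0) auto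
    thus ?thesis using False by (simp add: coeff_sum coeff_monom)
  qed
qed

lemma prod_smult: "(\<Prod>e\<in>A. smult (c e) (p e)) = smult (\<Prod>e\<in>A. c e) (\<Prod>e\<in>A. p e)"
  by (induction A rule: infinite_finite_induct) (auto simp: mult_smult_left mult_smult_right mult_ac)

lemma emb_bij: "bij_betw (emb n) (PiE ({..<n}\<times>{..<n}) (\<lambda>e. {..case_prod N e})) (below N)"
  if "zout n N" for N :: "nat \<Rightarrow> nat \<Rightarrow> nat"
proof (rule bij_betw_byWitness[where f'="\<lambda>\<Lambda>. restrict (case_prod \<Lambda>) ({..<n}\<times>{..<n})"])
  show "\<forall>a\<in>PiE ({..<n}\<times>{..<n}) (\<lambda>e. {..case_prod N e}). restrict (case_prod (emb n a)) ({..<n}\<times>{..<n}) = a"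
    by (auto simp: emb_def fun_eq_iff PiE_def extensional_def)
  show "\<forall>b\<in>below N. emb n (restrict (case_prod b) ({..<n}\<times>{..<n})) = b"
    using that by (auto simp: emb_def fun_eq_iff below_def zout_def) (metis le_zero_eq not_le)+
  show "emb n ` PiE ({..<n}\<times>{..<n}) (\<lambda>e. {..case_prod N e}) \<subseteq> below N"
    using that by (auto simp: emb_def below_def zout_def PiE_def Pi_def)
  show "(\<lambda>\<Lambda>. restrict (case_prod \<Lambda>) ({..<n}\<times>{..<n})) ` below N \<subseteq> PiE ({..<n}\<times>{..<n}) (\<lambda>e. {..case_prod N e})"
    unfolding below_def by (intro image_subsetI, subst restrict_PiE_iff) auto
qed

lemma vander_poly:
  assumes z: "zout n N"
  shows "(\<Sum>\<Lambda>\<in>below N. monom (wt n x \<Lambda> * wt n x (\<lambda>i j. N i j - \<Lambda> i j)) (smat n \<Lambda>))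
         = smult (wt n x N) ([:1, 1:] ^ smat n N)"
proof -
  let ?E = "{..<n}\<times>{..<n}"
  let ?F = "\<lambda>e l. monom (case_prod x e ^ l / fact l * (case_prod x e ^ (case_prod N e - l) / fact (case_prod N e - l))) l"
  have "(\<Sum>\<Lambda>\<in>below N. monom (wt n x \<Lambda> * wt n x (\<lambda>i j. N i j - \<Lambda> i j)) (smat n \<Lambda>))
        = (\<Sum>g\<in>PiE ?E (\<lambda>e. {..case_prod N e}). monom (wt n x (emb n g) * wt n x (\<lambda>i j. N i j - emb n g i j)) (smat n (emb n g)))"
    by (rule sum.reindex_bij_betw[OF emb_bij[OF z], symmetric])
  also have "\<dots> = (\<Sum>g\<in>PiE ?E (\<lambda>e. {..case_prod N e}). \<Prod>e\<in>?E. ?F e (g e))"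
  proof (rule sum.cong[OF refl])
    fix g assume g: "g \<in> PiE ?E (\<lambda>e. {..case_prod N e})"
    have e1: "case_prod (emb n g) e = g e" if "e \<in> ?E" for e using that by (auto simp: emb_def)
    have "wt n x (emb n g) * wt n x (\<lambda>i j. N i j - emb n g i j) =
       (\<Prod>e\<in>?E. case_prod x e ^ g e / fact (g e) * (case_prod x e ^ (case_prod N e - g e) / fact (case_prod N e - g e)))"
      unfolding wt_cart prod.distrib[symmetric]
      by (rule prod.cong[OF refl]) (auto simp: emb_def)
    moreover have "smat n (emb n g) = (\<Sum>e\<in>?E. g e)" unfolding smat_cart
      by (rule sum.cong[OF refl]) (auto simp: emb_def)
    ultimately show "monom (wt n x (emb n g) * wt n x (\<lambda>i j. N i j - emb n g i j)) (smat n (emb n g)) = (\<Prod>e\<in>?E. ?F e (g e))"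
      by (simp add: prod_monom)
  qed
  also have "\<dots> = (\<Prod>e\<in>?E. \<Sum>l\<in>{..case_prod N e}. ?F e l)"
    by (rule prod_sum_PiE[symmetric]) auto
  also have "\<dots> = (\<Prod>e\<in>?E. smult (case_prod x e ^ case_prod N e / fact (case_prod N e)) ([:1, 1:] ^ case_prod N e))"
    by (rule prod.cong[OF refl]) (rule binom_factor)
  also have "\<dots> = smult (\<Prod>e\<in>?E. case_prod x e ^ case_prod N e / fact (case_prod N e)) (\<Prod>e\<in>?E. [:1, 1:] ^ case_prod N e)"
    by (simp add: prod_smult)
  also have "\<dots> = smult (wt n x N) ([:1, 1:] ^ smat n N)"
    by (simp add: wt_cart smat_cart power_sum)
  finally show ?thesis .
qed

lemma vander_coeff:
  assumes z: "zout n N"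
  shows "(\<Sum>\<Lambda>\<in>{\<Lambda>\<in>below N. smat n \<Lambda> = t}. wt n x \<Lambda> * wt n x (\<lambda>i j. N i j - \<Lambda> i j))
         = wt n x N * of_nat (smat n N choose t)"
proof -
  have "coeff (\<Sum>\<Lambda>\<in>below N. monom (wt n x \<Lambda> * wt n x (\<lambda>i j. N i j - \<Lambda> i j)) (smat n \<Lambda>)) t
      = (\<Sum>\<Lambda>\<in>{\<Lambda>\<in>below N. smat n \<Lambda> = t}. wt n x \<Lambda> * wt n x (\<lambda>i j. N i j - \<Lambda> i j))"
    by (simp add: coeff_sum coeff_monom sum.inter_filter[OF finite_below[OF z], symmetric] eq_commute)
  moreover have "coeff (smult (wt n x N) ([:1, 1:] ^ smat n N)) t = wt n x N * of_nat (smat n N choose t)"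
  proof (cases "t \<le> smat n N")
    case True thus ?thesis by (simp add: coeff_linear_poly_power)
  next
    case False
    have "degree ([:1, 1:] ^ smat n N :: complex poly) \<le> smat n N"
      by (metis degree_linear_power order.refl)
    hence "coeff ([:1, 1:] ^ smat n N :: complex poly) t = 0" using False by (intro coeff_eq_0) auto
    thus ?thesis using False by simp
  qed
  ultimately show ?thesis using vander_poly[OF z, of x] by simp
qed

lemma vander_mat:
  fixes f :: "nat \<Rightarrow> complex"
  assumes z: "zout n N"
  shows "(\<Sum>\<Lambda>\<in>below N. wt n x \<Lambda> * wt n x (\<lambda>i j. N i j - \<Lambda> i j) * f (smat n \<Lambda>))
         = wt n x N * (\<Sum>t\<le>smat n N. of_nat (smat n N choose t) * f t)"
proof -
  have img: "smat n ` below N \<subseteq> {..smat n N}"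
    using below_sub_mats[OF z] by (auto simp: mats_def)
  have "(\<Sum>\<Lambda>\<in>below N. wt n x \<Lambda> * wt n x (\<lambda>i j. N i j - \<Lambda> i j) * f (smat n \<Lambda>))
     = (\<Sum>t\<le>smat n N. \<Sum>\<Lambda>\<in>{\<Lambda>\<in>below N. smat n \<Lambda> = t}. wt n x \<Lambda> * wt n x (\<lambda>i j. N i j - \<Lambda> i j) * f (smat n \<Lambda>))"
    by (rule sum.group[OF finite_below[OF z] finite_atMost img, symmetric])
  also have "\<dots> = (\<Sum>t\<le>smat n N. (\<Sum>\<Lambda>\<in>{\<Lambda>\<in>below N. smat n \<Lambda> = t}. wt n x \<Lambda> * wt n x (\<lambda>i j. N i j - \<Lambda> i j)) * f t)"
    by (rule sum.cong[OF refl]) (simp add: sum_distrib_right)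
  also have "\<dots> = wt n x N * (\<Sum>t\<le>smat n N. of_nat (smat n N choose t) * f t)"
    by (simp add: vander_coeff[OF z] sum_distrib_left mult_ac)
  finally show ?thesis .
qed

definition ccf :: "real \<Rightarrow> nat \<Rightarrow> nat \<Rightarrow> complex" where
  "ccf k P t = (\<Prod>m\<in>{(int P - 1) div 2..int P - 2 - int t}. of_real k + of_int m)"

definition Gm :: "real \<Rightarrow> int \<Rightarrow> complex" where
  "Gm k y = (\<Prod>m\<in>{0..y}. of_real k + of_int m)"

lemma k_plus_nz: "\<forall>N::nat. k \<noteq> - real N \<Longrightarrow> 0 \<le> m \<Longrightarrow> (of_real k + of_int m :: complex) \<noteq> 0"
proof
  assume a: "\<forall>N::nat. k \<noteq> - real N" "0 \<le> m" "(of_real k + of_int m :: complex) = 0"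
  hence "of_real k = (- of_int m :: complex)" by (simp add: add_eq_0_iff)
  hence "k = - real_of_int m" by (metis of_real_eq_iff of_real_minus of_real_of_int_eq)
  hence "k = - real (nat m)" using a(2) by simp
  with a(1) show False by blast
qed

lemma Gm_nz: "\<forall>N::nat. k \<noteq> - real N \<Longrightarrow> Gm k y \<noteq> 0"
  unfolding Gm_def by (subst prod_zero_iff) (auto dest: k_plus_nz)

lemma prod_range_Gm:
  assumes knz: "\<forall>N::nat. k \<noteq> - real N" and "0 \<le> x" "x \<le> y + 1"
  shows "(\<Prod>m\<in>{x..y}. of_real k + of_int m) = Gm k y / Gm k (x - 1)"
proof -
  have "{0..y} = {0..x-1} \<union> {x..y}" using assms by auto
  hence "Gm k y = Gm k (x - 1) * (\<Prod>m\<in>{x..y}. of_real k + of_int m)"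
    unfolding Gm_def by (simp add: prod.union_disjoint[symmetric] ivl_disj_int)
  thus ?thesis using Gm_nz[OF knz, of "x - 1"] by (simp add: field_simps)
qed

lemma poch_range: "pochhammer (of_real k + of_int A :: complex) len = (\<Prod>m\<in>{A..A + int len - 1}. of_real k + of_int m)"
proof -
  have "pochhammer (of_real k + of_int A :: complex) len = (\<Prod>i\<in>{0..<len}. of_real k + of_int A + of_nat i)"
    by (simp add: pochhammer_prod)
  also have "\<dots> = (\<Prod>m\<in>{A..A + int len - 1}. of_real k + of_int m)"
    by (rule prod.reindex_bij_witness[where i="\<lambda>m. nat (m - A)" and j="\<lambda>i. A + int i"]) auto
  finally show ?thesis .
qed

lemma poch_diff: "pochhammer (x::complex) (Suc m) - pochhammer (x - 1) (Suc m) = of_nat (Suc m) * pochhammer x m"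
proof -
  have "pochhammer (x - 1) (Suc m) = (x - 1) * pochhammer x m"
    by (simp add: pochhammer_rec)
  moreover have "pochhammer x (Suc m) = (x + of_nat m) * pochhammer x m"
    by (simp add: pochhammer_rec')
  ultimately show ?thesis by (simp add: algebra_simps)
qed

lemma alt_sum_shift:
  fixes f :: "nat \<Rightarrow> complex"
  shows "(\<Sum>u\<le>Suc r. (-1)^u * of_nat (Suc r choose u) * f u) = (\<Sum>u\<le>r. (-1)^u * of_nat (r choose u) * (f u - f (Suc u)))"
proof -
  have "(\<Sum>u\<le>Suc r. (-1)^u * of_nat (Suc r choose u) * f u)
      = f 0 + (\<Sum>u\<le>r. (-1)^(Suc u) * of_nat (Suc r choose Suc u) * f (Suc u))"
    by (subst sum.atMost_Suc_shift) simp
  also have "\<dots> = f 0 + (\<Sum>u\<le>r. (-1)^(Suc u) * of_nat (r choose u) * f (Suc u))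
                    + (\<Sum>u\<le>r. (-1)^(Suc u) * of_nat (r choose Suc u) * f (Suc u))"
    by (simp add: sum.distrib[symmetric] algebra_simps)
  also have "(\<Sum>u\<le>r. (-1)^(Suc u) * of_nat (r choose Suc u) * f (Suc u))
      = (\<Sum>u\<le>Suc r. (-1)^u * of_nat (r choose u) * f u) - f 0"
    using sum.atMost_Suc_shift[of "\<lambda>u. (-1)^u * of_nat (r choose u) * f u" r] by simp
  also have "(\<Sum>u\<le>Suc r. (-1)^u * of_nat (r choose u) * f u) = (\<Sum>u\<le>r. (-1)^u * of_nat (r choose u) * f u)"
    by simp
  finally show ?thesis by (simp add: sum_subtractf sum_negf algebra_simps)
qed

lemma FD: "m < r \<Longrightarrow> (\<Sum>u\<le>r. (-1)^u * of_nat (r choose u) * pochhammer (y - of_nat u :: complex) m) = 0"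
proof (induction r arbitrary: m y)
  case 0 thus ?case by simp
next
  case (Suc r)
  have "(\<Sum>u\<le>Suc r. (-1)^u * of_nat (Suc r choose u) * pochhammer (y - of_nat u :: complex) m)
     = (\<Sum>u\<le>r. (-1)^u * of_nat (r choose u) * (pochhammer (y - of_nat u :: complex) m - pochhammer (y - of_nat (Suc u)) m))"
    by (rule alt_sum_shift)
  also have "\<dots> = 0"
  proof (cases m)
    case 0 thus ?thesis by simp
  next
    case (Suc m')
    have "pochhammer (y - of_nat u :: complex) m - pochhammer (y - of_nat (Suc u)) m = of_nat m * pochhammer (y - of_nat u) m'" for u
      using poch_diff[of "y - of_nat u" m'] Suc by (simp add: algebra_simps)
    hence "(\<Sum>u\<le>r. (-1)^u * of_nat (r choose u) * (pochhammer (y - of_nat u :: complex) m - pochhammer (y - of_nat (Suc u)) m))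
        = of_nat m * (\<Sum>u\<le>r. (-1)^u * of_nat (r choose u) * pochhammer (y - of_nat u) m')"
      by (simp add: sum_distrib_left mult_ac)
    also have "\<dots> = 0" using Suc.IH[of m' y] Suc.prems \<open>m = Suc m'\<close> by simp
    finally show ?thesis .
  qed
  finally show ?case .
qed

lemma SI:
  assumes knz: "\<forall>N::nat. k \<noteq> - real N" and jS: "j \<le> S" and Sl: "S \<le> P div 2"
  shows "(\<Sum>t\<in>{j..S}. of_nat (S choose t) * of_nat (t choose j) * (-1)^(t-j) * ccf k P t *
            pochhammer (of_real k + of_nat P - of_nat S - of_nat (t - j)) (t - j))
         = (if j = S then ccf k P S else 0)"
proof (cases "j = S")
  case True thus ?thesis by simp
next
  case False
  hence jS': "j < S" using jS by simp
  define l' where "l' = (int P - 1) div 2"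
  define y where "y = (of_real k + of_nat P - of_nat S :: complex)"
  define cc' where "cc' = Gm k (int P - int S - 1) / Gm k (l' - 1)"
  have P2: "2 \<le> P" using jS' Sl by linarith
  have l'0: "0 \<le> l'" using P2 by (simp add: l'_def)
  have l'S: "l' \<le> int P - int S" using Sl unfolding l'_def by linarith
  have key: "ccf k P t * pochhammer (y - of_nat (t - j)) (t - j) = cc' * pochhammer (y - of_nat (t - j)) (S - 1 - j)"
    if t: "t \<in> {j..S}" for t
  proof -
    have ty: "y - of_nat (t - j) = of_real k + of_int (int P - int S - int (t - j))"
      by (simp add: y_def)
    have b0: "0 \<le> int P - int S - int (t - j)" using t Sl by auto
    have c1: "ccf k P t = Gm k (int P - 2 - int t) / Gm k (l' - 1)"
      unfolding ccf_def l'_def[symmetric] using t Sl l'0 l'S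
      by (subst prod_range_Gm[OF knz]) (auto simp: l'_def)
    have c2: "pochhammer (y - of_nat (t - j)) (t - j) = Gm k (int P - int S - 1) / Gm k (int P - int S - int (t - j) - 1)"
      unfolding ty poch_range using t b0
      by (subst prod_range_Gm[OF knz]) (auto simp: of_nat_diff)
    have c3: "pochhammer (y - of_nat (t - j)) (S - 1 - j) = Gm k (int P - 2 - int t) / Gm k (int P - int S - int (t - j) - 1)"
      unfolding ty poch_range using t b0 jS'
      by (subst prod_range_Gm[OF knz]) (auto simp: of_nat_diff algebra_simps)
    show ?thesis unfolding c1 c2 c3 cc'_def by simp
  qed
  have "(\<Sum>t\<in>{j..S}. of_nat (S choose t) * of_nat (t choose j) * (-1)^(t-j) * ccf k P t *
            pochhammer (of_real k + of_nat P - of_nat S - of_nat (t - j)) (t - j))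
      = (\<Sum>t\<in>{j..S}. cc' * of_nat (S choose j) * ((-1)^(t-j) * of_nat ((S - j) choose (t - j)) *
            pochhammer (y - of_nat (t - j)) (S - j - 1)))"
  proof (rule sum.cong[OF refl])
    fix t assume t: "t \<in> {j..S}"
    have "of_nat (S choose t) * of_nat (t choose j) = (of_nat (S choose j) * of_nat ((S - j) choose (t - j)) :: complex)"
      using choose_mult[of j t S] t by (simp flip: of_nat_mult)
    moreover have "S - 1 - j = S - j - 1" by simp
    ultimately show "of_nat (S choose t) * of_nat (t choose j) * (-1)^(t-j) * ccf k P t *
            pochhammer (of_real k + of_nat P - of_nat S - of_nat (t - j)) (t - j)
         = cc' * of_nat (S choose j) * ((-1)^(t-j) * of_nat ((S - j) choose (t - j)) *
            pochhammer (y - of_nat (t - j)) (S - j - 1))"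
      using key[OF t] unfolding y_def by (simp add: mult_ac)
  qed
  also have "\<dots> = cc' * of_nat (S choose j) * (\<Sum>t\<in>{j..S}. (-1)^(t-j) * of_nat ((S - j) choose (t - j)) *
            pochhammer (y - of_nat (t - j)) (S - j - 1))"
    by (simp add: sum_distrib_left)
  also have "(\<Sum>t\<in>{j..S}. (-1)^(t-j) * of_nat ((S - j) choose (t - j)) * pochhammer (y - of_nat (t - j)) (S - j - 1))
      = (\<Sum>u\<le>S - j. (-1)^u * of_nat ((S - j) choose u) * pochhammer (y - of_nat u) (S - j - 1))"
  proof -
    have "{j..S} = {0 + j..(S - j) + j}" using jS by simp
    hence "(\<Sum>t\<in>{j..S}. (-1)^(t-j) * of_nat ((S - j) choose (t - j)) * pochhammer (y - of_nat (t - j)) (S - j - 1))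
      = (\<Sum>u\<in>{0..S - j}. (-1)^u * of_nat ((S - j) choose u) * pochhammer (y - of_nat u) (S - j - 1))"
      by (simp only: sum.shift_bounds_cl_nat_ivl) simp
    thus ?thesis by (simp add: atLeast0AtMost)
  qed
  also have "\<dots> = 0" by (rule FD) (use jS' in simp)
  finally show ?thesis using False by simp
qed

lemma cpowr_add: "(z::complex) powr (a + b) = z powr a * z powr b"
  by (simp add: powr_def exp_add distrib_right)

lemma cpowr_diff1: "(z::complex) \<noteq> 0 \<Longrightarrow> z powr (a - 1) = z powr a / z"
proof -
  assume z: "z \<noteq> 0"
  have "z powr a = z powr (a - 1) * z powr 1" using cpowr_add[of z "a - 1" 1] by simp
  also have "z powr 1 = z" using z by (simp add: powr_def)
  finally show ?thesis using z by (simp add: field_simps)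
qed

lemma zden_nz: "a * d - b * c = 1 \<Longrightarrow> \<tau> \<in> uhp \<Longrightarrow> of_int c * \<tau> + of_int d \<noteq> (0::complex)"
proof
  assume det: "a * d - b * c = 1" and t: "\<tau> \<in> uhp" and z: "of_int c * \<tau> + of_int d = (0::complex)"
  from z have "Im (of_int c * \<tau> + of_int d) = 0" by simp
  hence "c = 0" using t by (simp add: uhp_def)
  with z have "d = 0" by simp
  with det \<open>c = 0\<close> show False by simp
qed

lemma Im_mob: "a * d - b * c = 1 \<Longrightarrow> Im (mob (a, b, c, d) \<tau>) = Im \<tau> / (cmod (of_int c * \<tau> + of_int d))^2"
proof -
  assume det: "a * d - b * c = 1"
  have "Im (mob (a, b, c, d) \<tau>) = (real_of_int a * Im \<tau> * (real_of_int c * Re \<tau> + real_of_int d) - (real_of_int a * Re \<tau> + real_of_int b) * (real_of_int c * Im \<tau>)) / (cmod (of_int c * \<tau> + of_int d))^2"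
    by (simp add: Im_divide cmod_power2)
  also have "real_of_int a * Im \<tau> * (real_of_int c * Re \<tau> + real_of_int d) - (real_of_int a * Re \<tau> + real_of_int b) * (real_of_int c * Im \<tau>)
     = real_of_int (a * d - b * c) * Im \<tau>" by (simp add: algebra_simps)
  finally show ?thesis using det by simp
qed

lemma mob_uhp: "a * d - b * c = 1 \<Longrightarrow> \<tau> \<in> uhp \<Longrightarrow> mob (a, b, c, d) \<tau> \<in> uhp"
  using Im_mob[of a d b c \<tau>] zden_nz[of a d b c \<tau>] by (simp add: uhp_def)

lemma open_uhp: "open uhp"
  unfolding uhp_def by (simp add: open_halfspace_component_gt[of 0 "\<i>", simplified] open_Collect_less continuous_on_Im continuous_on_const)

lemma mob_deriv: "a * d - b * c = 1 \<Longrightarrow> \<tau> \<in> uhp \<Longrightarrow>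
   (mob (a, b, c, d) has_field_derivative 1 / (of_int c * \<tau> + of_int d)^2) (at \<tau>)"
proof -
  assume det: "a * d - b * c = 1" and t: "\<tau> \<in> uhp"
  have z: "of_int c * \<tau> + of_int d \<noteq> (0::complex)" by (rule zden_nz[OF det t])
  have m: "mob (a, b, c, d) = (\<lambda>\<sigma>. (of_int a * \<sigma> + of_int b) / (of_int c * \<sigma> + of_int d))" by (simp add: fun_eq_iff)
  have "((\<lambda>\<sigma>. (of_int a * \<sigma> + of_int b) / (of_int c * \<sigma> + of_int d)) has_field_derivative
     ((of_int a) * (of_int c * \<tau> + of_int d) - (of_int a * \<tau> + of_int b) * of_int c) / (of_int c * \<tau> + of_int d)^2) (at \<tau>)"
    using z by (auto intro!: derivative_eq_intros simp: power2_eq_square)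
  moreover have "(of_int a) * (of_int c * \<tau> + of_int d) - (of_int a * \<tau> + of_int b) * of_int c = (of_int (a * d - b * c) :: complex)"
    by (simp add: algebra_simps)
  ultimately show ?thesis using det m by simp
qed

lemma zpowr_deriv:
  assumes det: "a * d - b * c = 1" and t: "\<tau> \<in> uhp"
  shows "((\<lambda>\<sigma>. (of_int c * \<sigma> + of_int d) powr w) has_field_derivative
           w * of_int c * (of_int c * \<tau> + of_int d) powr (w - 1)) (at \<tau>)"
proof (cases "c = 0")
  case True thus ?thesis by simp
next
  case False
  have "of_int c * \<tau> + of_int d \<notin> \<real>\<^sub>\<le>\<^sub>0"
  proof
    assume "of_int c * \<tau> + of_int d \<in> \<real>\<^sub>\<le>\<^sub>0"
    hence "Im (of_int c * \<tau> + of_int d) = 0" by (metis Im_complex_of_real nonpos_Reals_cases)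
    thus False using False t by (simp add: uhp_def)
  qed
  thus ?thesis by (auto intro!: derivative_eq_intros simp: mult_ac)
qed

lemma mob_holo: "a * d - b * c = 1 \<Longrightarrow> mob (a, b, c, d) holomorphic_on uhp"
  unfolding holomorphic_on_def field_differentiable_def
  by (meson mob_deriv has_field_derivative_at_within)

lemma mob_image: "a * d - b * c = 1 \<Longrightarrow> mob (a, b, c, d) ` uhp \<subseteq> uhp"
  using mob_uhp by blast

lemma binom_aux: "(r - j) * (r choose j) = Suc j * (r choose Suc j)"
  by (metis binomial_absorption binomial_absorb_comp)

definition KK :: "complex \<Rightarrow> int \<Rightarrow> nat \<Rightarrow> nat \<Rightarrow> complex" where
  "KK \<beta> c r j = of_nat (r choose j) * pochhammer (\<beta> + of_nat j) (r - j) * (- of_int c) ^ (r - j)"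

lemma KK_pascal:
  "KK \<beta> c (Suc r) j = (if j \<le> r then KK \<beta> c r j * (- (\<beta> + of_nat r + of_nat j)) * of_int c else 0)
                       + (if j = 0 then 0 else KK \<beta> c r (j - 1))"
proof (cases j)
  case 0
  thus ?thesis by (simp add: KK_def pochhammer_rec' algebra_simps)
next
  case (Suc j')
  show ?thesis
  proof (cases "j \<le> r")
    case False
    hence "j = Suc r \<or> j > Suc r" by auto
    thus ?thesis
    proof
      assume "j = Suc r" thus ?thesis using Suc by (simp add: KK_def)
    next
      assume "j > Suc r" thus ?thesis using Suc by (simp add: KK_def binomial_eq_0)
    qed
  next
    case True
    define P where "P = pochhammer (\<beta> + of_nat j) (r - j)"
    have p1: "pochhammer (\<beta> + of_nat j) (Suc r - j) = (\<beta> + of_nat r) * P"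
    proof -
      have "Suc r - j = Suc (r - j)" using True by simp
      thus ?thesis unfolding P_def using True by (simp add: pochhammer_rec' of_nat_diff)
    qed
    have p2: "pochhammer (\<beta> + of_nat j') (r - j') = (\<beta> + of_nat j') * P"
    proof -
      have "r - j' = Suc (r - j)" using True Suc by simp
      thus ?thesis unfolding P_def using Suc by (simp add: pochhammer_rec add_ac)
    qed
    have e1: "(- of_int c :: complex) ^ (Suc r - j) = (- of_int c) ^ (r - j) * (- of_int c)"
      using True by (simp add: Suc_diff_le)
    have e2: "r - j' = Suc r - j" using Suc by simp
    have b: "(of_nat (r - j') * of_nat (r choose j') :: complex) = of_nat j * of_nat (r choose j)"
      using binom_aux[of r j'] Suc by (metis of_nat_mult)
    have b2: "(of_nat (Suc r choose j) :: complex) = of_nat (r choose j') + of_nat (r choose j)"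
      using Suc by simp
    have rj: "(of_nat (r - j') :: complex) = of_nat r - of_nat j'"
      using True Suc by (simp add: of_nat_diff)
    have "KK \<beta> c (Suc r) j = of_nat (Suc r choose j) * (\<beta> + of_nat r) * P * (- of_int c) ^ (r - j) * (- of_int c)"
      unfolding KK_def p1 e1 by (simp add: mult_ac)
    also have "\<dots> = (of_nat (r choose j) * (\<beta> + of_nat r + of_nat j) + of_nat (r choose j') * (\<beta> + of_nat j'))
                       * P * (- of_int c) ^ (r - j) * (- of_int c)"
    proof -
      have "of_nat (Suc r choose j) * (\<beta> + of_nat r) = (of_nat (r choose j) * (\<beta> + of_nat r + of_nat j) + of_nat (r choose j') * (\<beta> + of_nat j') :: complex)"
        using b rj unfolding b2 by (simp add: algebra_simps Suc)
      thus ?thesis by simp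
    qed
    also have "\<dots> = KK \<beta> c r j * (- (\<beta> + of_nat r + of_nat j)) * of_int c + KK \<beta> c r j'"
      unfolding KK_def p2 unfolding e2 e1 P_def by (simp add: algebra_simps)
    finally show ?thesis using True Suc by simp
  qed
qed

lemma sum_pascal:
  "(\<Sum>j\<le>r. KK \<beta> c r j * (- (\<beta> + of_nat r + of_nat j)) * of_int c * X j + KK \<beta> c r j * X (Suc j))
   = (\<Sum>j\<le>Suc r. KK \<beta> c (Suc r) j * X j)"
proof -
  have "(\<Sum>j\<le>Suc r. KK \<beta> c (Suc r) j * X j)
     = (\<Sum>j\<le>Suc r. (if j \<le> r then KK \<beta> c r j * (- (\<beta> + of_nat r + of_nat j)) * of_int c else 0) * X j)
       + (\<Sum>j\<le>Suc r. (if j = 0 then 0 else KK \<beta> c r (j - 1)) * X j)"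
    by (simp add: KK_pascal distrib_right sum.distrib)
  also have "(\<Sum>j\<le>Suc r. (if j \<le> r then KK \<beta> c r j * (- (\<beta> + of_nat r + of_nat j)) * of_int c else 0) * X j)
     = (\<Sum>j\<le>r. KK \<beta> c r j * (- (\<beta> + of_nat r + of_nat j)) * of_int c * X j)"
    by (simp add: sum.atMost_Suc)
  also have "(\<Sum>j\<le>Suc r. (if j = 0 then 0 else KK \<beta> c r (j - 1)) * X j) = (\<Sum>j\<le>r. KK \<beta> c r j * X (Suc j))"
    by (subst sum.atMost_Suc_shift) simp
  finally show ?thesis by (simp add: sum.distrib)
qed

lemma deriv_slash:
  fixes F :: "complex \<Rightarrow> complex"
  assumes det: "a * d - b * c = 1" and F: "F holomorphic_on uhp"
  shows "\<tau> \<in> uhp \<Longrightarrow> (deriv ^^ r) (\<lambda>\<sigma>. (of_int c * \<sigma> + of_int d) powr (- \<beta>) * F (mob (a, b, c, d) \<sigma>)) \<tau>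
     = (\<Sum>j\<le>r. KK \<beta> c r j * (of_int c * \<tau> + of_int d) powr (- \<beta> - of_nat r - of_nat j) * (deriv ^^ j) F (mob (a, b, c, d) \<tau>))"
proof (induction r arbitrary: \<tau>)
  case 0
  thus ?case by (simp add: KK_def)
next
  case (Suc r)
  define z where "z = (\<lambda>\<sigma>. of_int c * \<sigma> + (of_int d :: complex))"
  define m where "m = mob (a, b, c, d)"
  define T where "T = (\<lambda>r \<sigma>. \<Sum>j\<le>r. KK \<beta> c r j * z \<sigma> powr (- \<beta> - of_nat r - of_nat j) * (deriv ^^ j) F (m \<sigma>))"
  let ?f = "\<lambda>\<sigma>. (of_int c * \<sigma> + of_int d) powr (- \<beta>) * F (mob (a, b, c, d) \<sigma>)"
  have t: "\<tau> \<in> uhp" by fact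
  have ev: "\<forall>\<^sub>F x in nhds \<tau>. (deriv ^^ r) ?f x = T r x"
    using eventually_nhds_in_open[OF open_uhp t] by eventually_elim (use Suc.IH in \<open>simp add: T_def z_def m_def\<close>)
  have "(deriv ^^ Suc r) ?f \<tau> = deriv ((deriv ^^ r) ?f) \<tau>" by simp
  also have "\<dots> = deriv (T r) \<tau>" by (rule deriv_cong_ev[OF ev refl])
  also have "deriv (T r) \<tau> = T (Suc r) \<tau>"
  proof (rule DERIV_imp_deriv)
    have zt: "z \<tau> \<noteq> 0" using zden_nz[OF det t] by (simp add: z_def)
    have mt: "m \<tau> \<in> uhp" using mob_uhp[OF det t] by (simp add: m_def)
    define Y where "Y = (\<lambda>j. z \<tau> powr (- \<beta> - of_nat (Suc r) - of_nat j))"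
    define X where "X = (\<lambda>j. Y j * (deriv ^^ j) F (m \<tau>))"
    have dj: "((\<lambda>\<sigma>. KK \<beta> c r j * z \<sigma> powr (- \<beta> - of_nat r - of_nat j) * (deriv ^^ j) F (m \<sigma>)) has_field_derivative
          KK \<beta> c r j * (- (\<beta> + of_nat r + of_nat j)) * of_int c * X j + KK \<beta> c r j * X (Suc j)) (at \<tau>)" for j
    proof -
      have h1: "((\<lambda>\<sigma>. z \<sigma> powr (- \<beta> - of_nat r - of_nat j)) has_field_derivative
                 (- \<beta> - of_nat r - of_nat j) * of_int c * z \<tau> powr ((- \<beta> - of_nat r - of_nat j) - 1)) (at \<tau>)"
        unfolding z_def by (rule zpowr_deriv[OF det t])
      have h2: "((\<lambda>\<sigma>. (deriv ^^ j) F (m \<sigma>)) has_field_derivative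
                 (deriv ^^ Suc j) F (m \<tau>) * (1 / z \<tau> ^ 2)) (at \<tau>)"
        unfolding m_def z_def
        by (rule DERIV_chain2[OF has_field_derivative_higher_deriv[OF F open_uhp] mob_deriv[OF det t]])
           (use mt in \<open>simp add: m_def\<close>)
      have p1: "z \<tau> powr ((- \<beta> - of_nat r - of_nat j) - 1) = Y j"
        unfolding Y_def by (simp add: algebra_simps)
      have p2: "z \<tau> powr (- \<beta> - of_nat r - of_nat j) * (1 / z \<tau> ^ 2) = Y (Suc j)"
      proof -
        have "Y (Suc j) = z \<tau> powr ((- \<beta> - of_nat r - of_nat j) - 1 - 1)"
          unfolding Y_def by (simp add: algebra_simps)
        also have "\<dots> = z \<tau> powr (- \<beta> - of_nat r - of_nat j) / z \<tau> / z \<tau>"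
          by (simp only: cpowr_diff1[OF zt])
        finally show ?thesis by (simp add: power2_eq_square field_simps)
      qed
      show ?thesis
        using DERIV_cmult[OF DERIV_mult[OF h1 h2], of "KK \<beta> c r j"]
        unfolding X_def p1 mult.assoc[symmetric]
        by (simp only: p2[symmetric]) (simp add: algebra_simps)
    qed
    have "(T r has_field_derivative (\<Sum>j\<le>r. KK \<beta> c r j * (- (\<beta> + of_nat r + of_nat j)) * of_int c * X j + KK \<beta> c r j * X (Suc j))) (at \<tau>)"
      unfolding T_def by (rule DERIV_sum) (rule dj)
    also have "(\<Sum>j\<le>r. KK \<beta> c r j * (- (\<beta> + of_nat r + of_nat j)) * of_int c * X j + KK \<beta> c r j * X (Suc j)) = T (Suc r) \<tau>"
      by (subst sum_pascal) (simp only: T_def X_def Y_def mult.assoc)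
    finally show "(T r has_field_derivative T (Suc r) \<tau>) (at \<tau>)" .
  qed
  finally show ?case by (simp add: T_def z_def m_def)
qed

lemma exp_shift_int: "n \<in> \<int> \<Longrightarrow> exp (x + 2 * n * pi * \<i>) = exp x"
  using exp_integer_2pi[of n] by (simp add: exp_add)

lemma branch:
  fixes e :: int and z :: complex
  assumes e: "e = 1 \<or> e = -1" and z: "z \<noteq> 0" and k2: "\<exists>m::int. k = of_int m / 2"
  shows "(of_int e * csqrt z) powr (complex_of_real (- 2 * (k + real s)))
         = (of_int e) powr (complex_of_real (- 2 * k)) * z powr (- (of_real k + of_nat s))"
proof -
  define K where "K = (of_real k + of_nat s :: complex)"
  have K2: "complex_of_real (- 2 * (k + real s)) = - 2 * K" by (simp add: K_def)
  define w where "w = csqrt z"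
  have w0: "w \<noteq> 0" using z by (simp add: w_def)
  have Lw: "Ln w = Ln z / 2"
  proof -
    have "w = exp (Ln z / 2)" using z by (simp add: w_def csqrt_exp_Ln)
    moreover have "- pi < Im (Ln z / 2)" "Im (Ln z / 2) \<le> pi"
      using mpi_less_Im_Ln[OF z] Im_Ln_le_pi[OF z] pi_gt_zero by auto
    ultimately show ?thesis by (simp add: Ln_exp)
  qed
  have wp: "w powr (- 2 * K) = z powr (- K)"
    using w0 z by (simp add: powr_def Lw)
  from k2 obtain m :: int where m: "k = of_int m / 2" by blast
  show ?thesis
  proof (cases "e = 1")
    case True
    thus ?thesis using wp by (simp add: K2 w_def K_def powr_def)
  next
    case False
    hence e1: "e = -1" using e by simp
    have lhs: "(- w) powr (- 2 * K) = exp (- 2 * K * Ln (- w))" using w0 by (simp add: powr_def)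
    have rhs1: "(-1 :: complex) powr (complex_of_real (- 2 * k)) = exp (- 2 * of_real k * (\<i> * of_real pi))"
      by (simp add: powr_def)
    have "(- w) powr (- 2 * K) = exp (- 2 * K * Ln w) * exp (- 2 * of_real k * (\<i> * of_real pi))"
    proof (cases "Im w \<le> 0 \<and> \<not> (Re w < 0 \<and> Im w = 0)")
      case True
      hence L: "Ln (- w) = Ln w + \<i> * pi" using Ln_minus[OF w0] by simp
      hence "(- w) powr (- 2 * K) = exp (- 2 * K * Ln w + (- 2 * of_real k * (\<i> * of_real pi)) + 2 * of_int (- int s) * pi * \<i>)"
        unfolding lhs L by (simp add: K_def algebra_simps)
      also have "\<dots> = exp (- 2 * K * Ln w + (- 2 * of_real k * (\<i> * of_real pi)))"
        by (rule exp_shift_int) simp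
      finally show ?thesis by (simp add: exp_diff exp_minus field_simps)
    next
      case False
      hence L: "Ln (- w) = Ln w - \<i> * pi" using Ln_minus[OF w0] by simp
      hence "(- w) powr (- 2 * K) = exp (- 2 * K * Ln w + (- 2 * of_real k * (\<i> * of_real pi)) + 2 * of_int (m + int s) * pi * \<i>)"
        unfolding lhs L by (simp add: K_def m algebra_simps)
      also have "\<dots> = exp (- 2 * K * Ln w + (- 2 * of_real k * (\<i> * of_real pi)))"
        by (rule exp_shift_int) simp
      finally show ?thesis by (simp add: exp_diff exp_minus field_simps)
    qed
    also have "exp (- 2 * K * Ln w) = z powr (- K)" using wp w0 by (simp add: powr_def)
    finally show ?thesis using e1 rhs1 by (simp add: K2 w_def K_def mult.commute)
  qed
qed

definition xG :: "(nat \<Rightarrow> nat \<Rightarrow> real) \<Rightarrow> nat \<Rightarrow> nat \<Rightarrow> complex" where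
  "xG G = (\<lambda>i j. - of_real pi * \<i> * of_real (G i j))"

definition csub :: "((nat \<Rightarrow> nat) \<Rightarrow> complex \<Rightarrow> complex) \<Rightarrow> (nat \<Rightarrow> nat) \<Rightarrow> (nat \<Rightarrow> nat) \<Rightarrow> complex \<Rightarrow> complex" where
  "csub hs p q = (if \<forall>i. q i \<le> p i then hs (\<lambda>i. p i - q i) else (\<lambda>_. 0))"

definition Dops :: "nat \<Rightarrow> (nat \<Rightarrow> nat \<Rightarrow> real) \<Rightarrow> real \<Rightarrow> (nat \<Rightarrow> nat) \<Rightarrow>
    ((nat \<Rightarrow> nat) \<Rightarrow> complex \<Rightarrow> complex) \<Rightarrow> complex \<Rightarrow> complex" where
  "Dops n G k p hs \<tau> = (4 ^ (sidx n p div 2) * fact (sidx n p div 2)) *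
     (\<Sum>\<Lambda>\<in>mats n (sidx n p div 2). wt n (xG G) \<Lambda> * ccf k (sidx n p) (smat n \<Lambda>) *
        (deriv ^^ smat n \<Lambda>) (csub hs p (piL n \<Lambda>)) \<tau>)"

definition slashs :: "nat \<Rightarrow> (nat \<Rightarrow> nat \<Rightarrow> real) \<Rightarrow> real \<Rightarrow>
    ((nat \<Rightarrow> nat) \<Rightarrow> complex \<Rightarrow> complex) \<Rightarrow> mpel \<Rightarrow> (nat \<Rightarrow> nat) \<Rightarrow> complex \<Rightarrow> complex" where
  "slashs n G k hs g p \<tau> =
     (case g of ((a, b, c, d), e) \<Rightarrow>
       (of_int e) powr (complex_of_real (- 2 * k)) *
       (\<Sum>\<Lambda>\<in>mats n (sidx n p).
          (powL n (\<lambda>i j. - of_real pi * \<i> * of_int c * of_real (G i j)) \<Lambda> / factL n \<Lambda>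
           * (of_int c * \<tau> + of_int d) powr
               (- (of_real k + of_nat (sidx n p) - of_nat (smat n \<Lambda>))))
          * csub hs p (piL n \<Lambda>) (mob (a, b, c, d) \<tau>)))"

lemma vderiv_comp: "(vderiv ^^ m) f \<tau> $ i = (deriv ^^ m) (\<lambda>\<sigma>. f \<sigma> $ i) \<tau>"
proof (induction m arbitrary: \<tau>)
  case 0 thus ?case by simp
next
  case (Suc m)
  have "(\<lambda>z. (vderiv ^^ m) f z $ i) = (deriv ^^ m) (\<lambda>\<sigma>. f \<sigma> $ i)" using Suc.IH by (simp add: fun_eq_iff)
  have "(vderiv ^^ Suc m) f \<tau> $ i = deriv (\<lambda>z. (vderiv ^^ m) f z $ i) \<tau>"
    by (simp add: vderiv_def)
  thus ?case using \<open>(\<lambda>z. (vderiv ^^ m) f z $ i) = _\<close> by simp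
qed

lemma coeff_sub_comp: "coeff_sub h p q \<sigma> $ i = csub (\<lambda>j \<sigma>. h j \<sigma> $ i) p q \<sigma>"
  by (simp add: coeff_sub_def csub_def)

lemma coeff_sub_comp': "(\<lambda>\<sigma>. coeff_sub h p q \<sigma> $ i) = csub (\<lambda>j \<sigma>. h j \<sigma> $ i) p q"
  by (simp add: coeff_sub_comp fun_eq_iff)

lemma Dop_comp: "Dop n G k p h \<tau> $ i = Dops n G k p (\<lambda>j \<sigma>. h j \<sigma> $ i) \<tau>"
  unfolding Dop_def Dops_def Let_def
  by (simp add: sum_component vderiv_comp coeff_sub_comp' wt_def xG_def ccf_def)

lemma slash_comp: "slash_coeff n G k h g p \<tau> $ i = slashs n G k (\<lambda>j \<sigma>. h j \<sigma> $ i) g p \<tau>"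
  unfolding slash_coeff_def slashs_def
  by (simp add: sum_component coeff_sub_comp split: prod.splits)

lemma csub_true: "\<forall>i. q i \<le> p i \<Longrightarrow> csub hs p q = hs (\<lambda>i. p i - q i)"
  by (simp add: csub_def)

lemma csub_false: "\<not> (\<forall>i. q i \<le> p i) \<Longrightarrow> csub hs p q = (\<lambda>_. 0)"
  unfolding csub_def by (rule if_not_P)

lemma csub_holo: "(\<And>j. hs j holomorphic_on S) \<Longrightarrow> csub hs p q holomorphic_on S"
  by (simp add: csub_def)

lemma HD_sum:
  assumes "finite X" "\<And>x. x \<in> X \<Longrightarrow> f x holomorphic_on uhp" "\<tau> \<in> uhp"
  shows "(deriv ^^ r) (\<lambda>\<sigma>. \<Sum>x\<in>X. f x \<sigma>) \<tau> = (\<Sum>x\<in>X. (deriv ^^ r) (f x) \<tau>)"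
  using assms
proof (induction X rule: finite_induct)
  case empty thus ?case by (simp add: higher_deriv_const)
next
  case (insert x X)
  have "(deriv ^^ r) (\<lambda>\<sigma>. \<Sum>x\<in>insert x X. f x \<sigma>) \<tau> = (deriv ^^ r) (\<lambda>\<sigma>. f x \<sigma> + (\<Sum>x\<in>X. f x \<sigma>)) \<tau>"
    using insert by simp
  also have "\<dots> = (deriv ^^ r) (f x) \<tau> + (deriv ^^ r) (\<lambda>\<sigma>. \<Sum>x\<in>X. f x \<sigma>) \<tau>"
    by (rule higher_deriv_add[OF _ _ open_uhp insert.prems(2)])
       (use insert in \<open>auto intro!: holomorphic_intros\<close>)
  finally show ?case using insert by simp
qed

lemma HD_cmult: "f holomorphic_on uhp \<Longrightarrow> \<tau> \<in> uhp \<Longrightarrow> (deriv ^^ r) (\<lambda>\<sigma>. c * f \<sigma>) \<tau> = c * (deriv ^^ r) f \<tau>"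
  by (rule higher_deriv_cmult[OF _ _ open_uhp])

lemma zpowr_holo:
  assumes det: "a * d - b * c = 1" shows "(\<lambda>\<sigma>. (of_int c * \<sigma> + of_int d) powr w) holomorphic_on uhp"
  unfolding holomorphic_on_def field_differentiable_def
proof (intro ballI exI)
  fix x assume "x \<in> uhp"
  thus "((\<lambda>\<sigma>. (of_int c * \<sigma> + of_int d) powr w) has_field_derivative
          w * of_int c * (of_int c * x + of_int d) powr (w - 1)) (at x within uhp)"
    by (rule has_field_derivative_at_within[OF zpowr_deriv[OF det]])
qed

lemma slash_term_holo:
  assumes det: "a * d - b * c = 1" and F: "F holomorphic_on uhp"
  shows "(\<lambda>\<sigma>. (of_int c * \<sigma> + of_int d) powr w * F (mob (a, b, c, d) \<sigma>)) holomorphic_on uhp"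
proof -
  have "(F \<circ> mob (a, b, c, d)) holomorphic_on uhp"
    by (rule holomorphic_on_compose_gen[OF mob_holo[OF det] F mob_image[OF det]])
  from holomorphic_on_mult[OF zpowr_holo[OF det] this] show ?thesis by (simp add: o_def)
qed

lemma slashs_holo:
  assumes det: "a * d - b * c = 1" and hol: "\<And>j. hs j holomorphic_on uhp"
  shows "slashs n G k hs ((a, b, c, d), e) q holomorphic_on uhp"
proof -
  have hm: "(\<lambda>\<sigma>. csub hs q q' (mob (a, b, c, d) \<sigma>)) holomorphic_on uhp" for q'
  proof -
    have "(csub hs q q' \<circ> mob (a, b, c, d)) holomorphic_on uhp"
      by (rule holomorphic_on_compose_gen[OF mob_holo[OF det] csub_holo[of hs, OF hol] mob_image[OF det]])
    thus ?thesis by (simp add: o_def del: mob.simps)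
  qed
  have eq: "slashs n G k hs ((a, b, c, d), e) q = (\<lambda>\<sigma>. (of_int e) powr (complex_of_real (- 2 * k)) *
       (\<Sum>\<Lambda>\<in>mats n (sidx n q).
          (powL n (\<lambda>i j. - of_real pi * \<i> * of_int c * of_real (G i j)) \<Lambda> / factL n \<Lambda>
           * (of_int c * \<sigma> + of_int d) powr
               (- (of_real k + of_nat (sidx n q) - of_nat (smat n \<Lambda>))))
          * csub hs q (piL n \<Lambda>) (mob (a, b, c, d) \<sigma>)))"
    by (simp add: slashs_def fun_eq_iff del: mob.simps)
  show ?thesis unfolding eq
    by (rule holomorphic_on_mult[OF holomorphic_on_const holomorphic_on_sum],
        rule holomorphic_on_mult[OF holomorphic_on_mult[OF holomorphic_on_const zpowr_holo[OF det]] hm])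
qed

lemma Dops_holo:
  assumes hol: "\<And>j. hs j holomorphic_on uhp"
  shows "(\<lambda>\<tau>. Dops n G k p hs \<tau>) holomorphic_on uhp"
proof -
  have hd: "\<And>m q. (deriv ^^ m) (csub hs p q) holomorphic_on uhp"
    by (rule holomorphic_higher_deriv[OF csub_holo[of hs, OF hol] open_uhp])
  show ?thesis unfolding Dops_def by (intro holomorphic_intros hd)
qed

lemma csub_sum: "csub (\<lambda>q \<sigma>. \<Sum>x\<in>X. a x * f x q \<sigma>) p q' \<sigma> = (\<Sum>x\<in>X. a x * csub (f x) p q' \<sigma>)"
proof (cases "\<forall>i. q' i \<le> p i")
  case True thus ?thesis by (simp add: csub_true[OF True])
next
  case False thus ?thesis by (simp add: csub_false[OF False])
qed

lemma Dops_sum: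
  assumes fin: "finite X" and hol: "\<And>x j. x \<in> X \<Longrightarrow> f x j holomorphic_on uhp" and t: "\<tau> \<in> uhp"
  shows "Dops n G k p (\<lambda>q \<sigma>. \<Sum>x\<in>X. a x * f x q \<sigma>) \<tau> = (\<Sum>x\<in>X. a x * Dops n G k p (f x) \<tau>)"
proof -
  have "(deriv ^^ m) (csub (\<lambda>q \<sigma>. \<Sum>x\<in>X. a x * f x q \<sigma>) p q') \<tau> = (\<Sum>x\<in>X. a x * (deriv ^^ m) (csub (f x) p q') \<tau>)"
    for m q'
  proof -
    have "(deriv ^^ m) (csub (\<lambda>q \<sigma>. \<Sum>x\<in>X. a x * f x q \<sigma>) p q') \<tau> = (deriv ^^ m) (\<lambda>\<sigma>. \<Sum>x\<in>X. a x * csub (f x) p q' \<sigma>) \<tau>"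
      by (simp add: csub_sum[abs_def])
    also have "\<dots> = (\<Sum>x\<in>X. (deriv ^^ m) (\<lambda>\<sigma>. a x * csub (f x) p q' \<sigma>) \<tau>)"
      by (rule HD_sum[OF fin _ t]) (use hol csub_holo in \<open>auto intro!: holomorphic_intros\<close>)
    also have "\<dots> = (\<Sum>x\<in>X. a x * (deriv ^^ m) (csub (f x) p q') \<tau>)"
      by (rule sum.cong[OF refl], rule HD_cmult[OF _ t]) (use hol csub_holo in auto)
    finally show ?thesis .
  qed
  thus ?thesis unfolding Dops_def
    by (simp add: sum_distrib_left sum_distrib_right mult_ac sum.swap[of _ X])
qed

lemma Dops_lin2:
  assumes hf: "\<And>j. f j holomorphic_on uhp" and hg: "\<And>j. g j holomorphic_on uhp" and t: "\<tau> \<in> uhp"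
  shows "Dops n G k p (\<lambda>q \<sigma>. u * f q \<sigma> + v * g q \<sigma>) \<tau> = u * Dops n G k p f \<tau> + v * Dops n G k p g \<tau>"
proof -
  have "Dops n G k p (\<lambda>q \<sigma>. \<Sum>x\<in>UNIV. (if x then u else v) * (if x then f else g) q \<sigma>) \<tau>
        = (\<Sum>x\<in>UNIV. (if x then u else v) * Dops n G k p (if x then f else g) \<tau>)"
    by (rule Dops_sum) (use hf hg t in auto)
  thus ?thesis by (simp add: UNIV_bool add.commute)
qed

lemma Dops_cong:
  assumes p: "p \<in> midx n" and t: "\<tau> \<in> uhp" and eq: "\<And>j \<sigma>. j \<in> midx n \<Longrightarrow> \<sigma> \<in> uhp \<Longrightarrow> hs j \<sigma> = hs' j \<sigma>"
  shows "Dops n G k p hs \<tau> = Dops n G k p hs' \<tau>"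
proof -
  have "(deriv ^^ m) (csub hs p q) \<tau> = (deriv ^^ m) (csub hs' p q) \<tau>" for m q
  proof (rule higher_deriv_cong_ev[OF _ refl])
    show "\<forall>\<^sub>F x in nhds \<tau>. csub hs p q x = csub hs' p q x"
      using eventually_nhds_in_open[OF open_uhp t]
      by eventually_elim (use eq midx_sub[OF p] in \<open>auto simp: csub_def\<close>)
  qed
  thus ?thesis unfolding Dops_def by simp
qed

definition Rs :: "nat \<Rightarrow> (nat \<Rightarrow> nat \<Rightarrow> real) \<Rightarrow> real \<Rightarrow> (nat \<Rightarrow> nat) \<Rightarrow>
    ((nat \<Rightarrow> nat) \<Rightarrow> complex \<Rightarrow> complex) \<Rightarrow> complex \<Rightarrow> complex" where
  "Rs n G k p hs \<tau> = (\<Sum>\<Lambda>\<in>mats n (sidx n p div 2) - {\<lambda>i j. 0}. wt n (xG G) \<Lambda> * ccf k (sidx n p) (smat n \<Lambda>) *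
        (deriv ^^ smat n \<Lambda>) (csub hs p (piL n \<Lambda>)) \<tau>)"

definition AA :: "nat \<Rightarrow> (nat \<Rightarrow> nat) \<Rightarrow> complex" where
  "AA n p = 4 ^ (sidx n p div 2) * fact (sidx n p div 2)"

lemma zero_mats: "(\<lambda>i j. 0) \<in> mats n N" by (simp add: mats_def smat_def)

lemma Dops_decomp: "Dops n G k p hs \<tau> = AA n p * (ccf k (sidx n p) 0 * hs p \<tau> + Rs n G k p hs \<tau>)"
proof -
  have pz: "piL n (\<lambda>i j. 0) = (\<lambda>i. 0)" by (simp add: piL_def fun_eq_iff)
  have w0: "wt n x (\<lambda>i j. 0) = 1" for x by (simp add: wt_def powL_def factL_def)
  have c0: "csub hs p (\<lambda>i. 0) = hs p" by (simp add: csub_def)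
  show ?thesis unfolding Dops_def Rs_def AA_def
    by (subst sum.remove[OF finite_mats zero_mats]) (simp add: pz w0 c0 smat_def)
qed

lemma AA_nz: "AA n p \<noteq> 0" by (simp add: AA_def)

lemma cc0_nz: assumes knz: "\<forall>N::nat. k \<noteq> - real N" shows "ccf k P 0 \<noteq> 0"
proof -
  have "of_real k + of_int m \<noteq> (0::complex)" if m: "m \<in> {(int P - 1) div 2..int P - 2 - int 0}" for m
  proof -
    from m have "0 \<le> m" by (cases P) auto
    thus ?thesis by (rule k_plus_nz[OF knz])
  qed
  thus ?thesis unfolding ccf_def by (subst prod_zero_iff) auto
qed

lemma Rs_cong:
  assumes p: "p \<in> midx n" and t: "\<tau> \<in> uhp"
    and eq: "\<And>j \<sigma>. j \<in> midx n \<Longrightarrow> sidx n j < sidx n p \<Longrightarrow> \<sigma> \<in> uhp \<Longrightarrow> hs j \<sigma> = hs' j \<sigma>"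
  shows "Rs n G k p hs \<tau> = Rs n G k p hs' \<tau>"
  unfolding Rs_def
proof (rule sum.cong[OF refl])
  fix \<Lambda> assume L: "\<Lambda> \<in> mats n (sidx n p div 2) - {\<lambda>i j. 0}"
  have "(deriv ^^ smat n \<Lambda>) (csub hs p (piL n \<Lambda>)) \<tau> = (deriv ^^ smat n \<Lambda>) (csub hs' p (piL n \<Lambda>)) \<tau>"
  proof (cases "\<forall>i. piL n \<Lambda> i \<le> p i")
    case True
    have lt: "sidx n (\<lambda>i. p i - piL n \<Lambda> i) < sidx n p"
      by (rule sidx_sub_less[OF p True]) (use L zout_mats in auto)
    show ?thesis unfolding csub_true[OF True]
    proof (rule higher_deriv_cong_ev[OF _ refl])
      show "\<forall>\<^sub>F x in nhds \<tau>. hs (\<lambda>i. p i - piL n \<Lambda> i) x = hs' (\<lambda>i. p i - piL n \<Lambda> i) x"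
        using eventually_nhds_in_open[OF open_uhp t]
        by eventually_elim (use eq midx_sub[OF p] lt in auto)
    qed
  next
    case False thus ?thesis by (simp add: csub_false[OF False])
  qed
  thus "wt n (xG G) \<Lambda> * ccf k (sidx n p) (smat n \<Lambda>) * (deriv ^^ smat n \<Lambda>) (csub hs p (piL n \<Lambda>)) \<tau> =
        wt n (xG G) \<Lambda> * ccf k (sidx n p) (smat n \<Lambda>) * (deriv ^^ smat n \<Lambda>) (csub hs' p (piL n \<Lambda>)) \<tau>" by simp
qed

lemma Rs_zero_fun: "Rs n G k p (\<lambda>j \<sigma>. 0) \<tau> = 0"
proof -
  have "csub (\<lambda>j \<sigma>. 0) p q = (\<lambda>_. 0)" for q by (simp add: csub_def)
  thus ?thesis unfolding Rs_def by (simp add: higher_deriv_const)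
qed

lemma Dops_inj:
  assumes knz: "\<forall>N::nat. k \<noteq> - real N"
    and Z: "\<And>p \<tau>. p \<in> midx n \<Longrightarrow> \<tau> \<in> uhp \<Longrightarrow> Dops n G k p hs \<tau> = 0"
  shows "p \<in> midx n \<Longrightarrow> \<tau> \<in> uhp \<Longrightarrow> hs p \<tau> = 0"
proof (induction "sidx n p" arbitrary: p \<tau> rule: less_induct)
  case less
  have "Rs n G k p hs \<tau> = Rs n G k p (\<lambda>j \<sigma>. 0) \<tau>"
    by (rule Rs_cong[OF less.prems]) (use less.hyps in auto)
  hence R0: "Rs n G k p hs \<tau> = 0" by (simp add: Rs_zero_fun)
  have "0 = AA n p * (ccf k (sidx n p) 0 * hs p \<tau>)"
    using Z[OF less.prems] Dops_decomp[of n G k p hs \<tau>] R0 by simp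
  thus ?case using AA_nz[of n p] cc0_nz[OF knz] by simp
qed

primrec stage :: "nat \<Rightarrow> (nat \<Rightarrow> nat \<Rightarrow> real) \<Rightarrow> real \<Rightarrow> ((nat \<Rightarrow> nat) \<Rightarrow> complex \<Rightarrow> complex) \<Rightarrow> nat
    \<Rightarrow> (nat \<Rightarrow> nat) \<Rightarrow> complex \<Rightarrow> complex" where
  "stage n G k gs 0 = (\<lambda>p \<tau>. 0)"
| "stage n G k gs (Suc N) = (\<lambda>p \<tau>. if p \<in> midx n \<and> sidx n p = N \<and> \<tau> \<in> uhp
       then (gs p \<tau> / AA n p - Rs n G k p (stage n G k gs N) \<tau>) / ccf k (sidx n p) 0
       else stage n G k gs N p \<tau>)"

definition hsol :: "nat \<Rightarrow> (nat \<Rightarrow> nat \<Rightarrow> real) \<Rightarrow> real \<Rightarrow> ((nat \<Rightarrow> nat) \<Rightarrow> complex \<Rightarrow> complex)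
    \<Rightarrow> (nat \<Rightarrow> nat) \<Rightarrow> complex \<Rightarrow> complex" where
  "hsol n G k gs = (\<lambda>p. stage n G k gs (Suc (sidx n p)) p)"

lemma stage_mono: "sidx n j < N \<Longrightarrow> N \<le> M \<Longrightarrow> stage n G k gs M j = stage n G k gs N j"
proof (induction M)
  case 0 thus ?case by simp
next
  case (Suc M)
  show ?case
  proof (cases "N = Suc M")
    case True thus ?thesis by simp
  next
    case False
    hence "N \<le> M" using Suc.prems by simp
    moreover have "sidx n j \<noteq> M" using Suc.prems False by simp
    ultimately show ?thesis using Suc.IH Suc.prems by (simp add: fun_eq_iff)
  qed
qed

lemma stage_hsol: "sidx n j < N \<Longrightarrow> stage n G k gs N j = hsol n G k gs j"
  unfolding hsol_def by (rule stage_mono) auto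

lemma stage_out: "j \<notin> midx n \<or> \<tau> \<notin> uhp \<Longrightarrow> stage n G k gs N j \<tau> = 0"
  by (induction N) auto

lemma hsol_out: "j \<notin> midx n \<or> \<tau> \<notin> uhp \<Longrightarrow> hsol n G k gs j \<tau> = 0"
  unfolding hsol_def by (rule stage_out)

lemma hsol_eq:
  assumes p: "p \<in> midx n" and t: "\<tau> \<in> uhp"
  shows "hsol n G k gs p \<tau> = (gs p \<tau> / AA n p - Rs n G k p (hsol n G k gs) \<tau>) / ccf k (sidx n p) 0"
proof -
  have "Rs n G k p (stage n G k gs (sidx n p)) \<tau> = Rs n G k p (hsol n G k gs) \<tau>"
    by (rule Rs_cong[OF p t]) (simp add: stage_hsol)
  thus ?thesis using p t by (simp add: hsol_def)
qed

lemma hsol_D: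
  assumes knz: "\<forall>N::nat. k \<noteq> - real N" and p: "p \<in> midx n" and t: "\<tau> \<in> uhp"
  shows "Dops n G k p (hsol n G k gs) \<tau> = gs p \<tau>"
  unfolding Dops_decomp hsol_eq[OF p t] using AA_nz[of n p] cc0_nz[OF knz, of "sidx n p"]
  by (simp add: field_simps)

lemma hsol_holo:
  assumes gh: "\<And>p. p \<in> midx n \<Longrightarrow> gs p holomorphic_on uhp"
  shows "hsol n G k gs j holomorphic_on uhp"
proof (induction "sidx n j" arbitrary: j rule: less_induct)
  case less
  show ?case
  proof (cases "j \<in> midx n")
    case False
    hence "hsol n G k gs j = (\<lambda>_. 0)" by (simp add: hsol_out fun_eq_iff)
    thus ?thesis by simp
  next
    case True
    have cs: "csub (stage n G k gs (sidx n j)) j (piL n \<Lambda>) holomorphic_on uhp"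
      if L: "\<Lambda> \<in> mats n (sidx n j div 2) - {\<lambda>i j. 0}" for \<Lambda>
    proof (cases "\<forall>i. piL n \<Lambda> i \<le> j i")
      case T: True
      have lt: "sidx n (\<lambda>i. j i - piL n \<Lambda> i) < sidx n j"
        by (rule sidx_sub_less[OF True T]) (use L zout_mats in auto)
      show ?thesis unfolding csub_true[OF T] stage_hsol[OF lt] by (rule less.hyps[OF lt])
    next
      case False thus ?thesis by (simp add: csub_false[OF False])
    qed
    have hR: "(\<lambda>\<tau>. Rs n G k j (stage n G k gs (sidx n j)) \<tau>) holomorphic_on uhp"
      unfolding Rs_def
      by (intro holomorphic_intros holomorphic_higher_deriv[OF cs open_uhp])
    have "(\<lambda>\<tau>. (gs j \<tau> / AA n j - Rs n G k j (stage n G k gs (sidx n j)) \<tau>) / ccf k (sidx n j) 0) holomorphic_on uhp"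
      using gh[OF True] hR AA_nz[of n j] by (intro holomorphic_intros) auto
    thus ?thesis
      by (rule holomorphic_transform) (use True in \<open>simp add: hsol_def\<close>)
  qed
qed

lemma powL_scale: "powL n (\<lambda>i j. - of_real pi * \<i> * of_int c * of_real (G i j)) M = of_int c ^ smat n M * powL n (xG G) M"
proof -
  have "powL n (\<lambda>i j. - of_real pi * \<i> * of_int c * of_real (G i j)) M
      = (\<Prod>i<n. \<Prod>j<n. of_int c ^ M i j * xG G i j ^ M i j)"
  proof -
    have e: "(- of_real pi * \<i> * of_int c * of_real (G i j) :: complex) = of_int c * xG G i j" for i j
      by (simp add: xG_def)
    show ?thesis unfolding powL_def e power_mult_distrib ..
  qed
  also have "\<dots> = (\<Prod>i<n. \<Prod>j<n. of_int c ^ M i j) * powL n (xG G) M"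
    unfolding powL_def by (simp add: prod.distrib)
  also have "(\<Prod>i<n. \<Prod>j<n. (of_int c :: complex) ^ M i j) = of_int c ^ smat n M"
    unfolding smat_def by (simp add: power_sum)
  finally show ?thesis .
qed

lemma csub_csub: "\<forall>i. q i \<le> p i \<Longrightarrow> csub hs (\<lambda>i. p i - q i) r = csub hs p (\<lambda>i. q i + r i)"
proof -
  assume a: "\<forall>i. q i \<le> p i"
  have c: "(\<forall>i. r i \<le> p i - q i) = (\<forall>i. q i + r i \<le> p i)"
  proof -
    have "(r i \<le> p i - q i) = (q i + r i \<le> p i)" for i using a[rule_format, of i] by linarith
    thus ?thesis by simp
  qed
  have d: "(\<lambda>i. p i - q i - r i) = (\<lambda>i. p i - (q i + r i))" by (simp add: fun_eq_iff)
  show ?thesis unfolding csub_def c d by simp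
qed

lemma tri_swap:
  fixes g :: "nat \<Rightarrow> nat \<Rightarrow> complex"
  shows "(\<Sum>t\<le>S. \<Sum>j\<le>t. g t j) = (\<Sum>j\<le>S. \<Sum>t\<in>{j..S}. g t j)"
proof (induction S)
  case 0 thus ?case by simp
next
  case (Suc S)
  have "(\<Sum>j\<le>Suc S. \<Sum>t\<in>{j..Suc S}. g t j) = (\<Sum>j\<le>S. \<Sum>t\<in>{j..Suc S}. g t j) + g (Suc S) (Suc S)"
    by simp
  also have "(\<Sum>j\<le>S. \<Sum>t\<in>{j..Suc S}. g t j) = (\<Sum>j\<le>S. (\<Sum>t\<in>{j..S}. g t j) + g (Suc S) j)"
    by (rule sum.cong[OF refl]) (simp add: sum.cl_ivl_Suc)
  finally show ?case using Suc by (simp add: sum.distrib)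
qed

lemma smat_diff: "\<Lambda> \<in> below N \<Longrightarrow> smat n (\<lambda>i j. N i j - \<Lambda> i j) = smat n N - smat n \<Lambda>"
proof -
  assume L: "\<Lambda> \<in> below N"
  have le: "\<Lambda> i j \<le> N i j" for i j using L by (simp add: below_def)
  have r: "(\<Sum>j<n. N i j - \<Lambda> i j) = (\<Sum>j<n. N i j) - (\<Sum>j<n. \<Lambda> i j)" for i
    by (rule sum_subtractf_nat) (simp add: le)
  have "(\<Sum>i<n. (\<Sum>j<n. N i j) - (\<Sum>j<n. \<Lambda> i j)) = (\<Sum>i<n. \<Sum>j<n. N i j) - (\<Sum>i<n. \<Sum>j<n. \<Lambda> i j)"
    by (rule sum_subtractf_nat) (simp add: le sum_mono)
  thus ?thesis unfolding smat_def r .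
qed

lemma smat_mono: "\<Lambda> \<in> below N \<Longrightarrow> smat n \<Lambda> \<le> smat n N"
proof -
  assume L: "\<Lambda> \<in> below N"
  have le: "\<Lambda> i j \<le> N i j" for i j using L by (simp add: below_def)
  show ?thesis unfolding smat_def by (intro sum_mono le)
qed

lemma below_zout: "zout n N \<Longrightarrow> \<Lambda> \<in> below N \<Longrightarrow> zout n \<Lambda>"
proof -
  assume zN: "zout n N" and L: "\<Lambda> \<in> below N"
  have "\<Lambda> i j = 0" if c: "n \<le> i \<or> n \<le> j" for i j
  proof -
    have "N i j = 0" using zN c unfolding zout_def by blast
    moreover have "\<Lambda> i j \<le> N i j" using L by (simp add: below_def)
    ultimately show ?thesis by simp
  qed
  thus ?thesis by (simp add: zout_def)
qed

lemma piL_split: "\<Lambda> \<in> below N \<Longrightarrow> (\<lambda>i. piL n \<Lambda> i + piL n (\<lambda>i j. N i j - \<Lambda> i j) i) = piL n N"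
proof -
  assume "\<Lambda> \<in> below N"
  hence "(\<lambda>i j. \<Lambda> i j + (N i j - \<Lambda> i j)) = N" by (auto simp: below_def fun_eq_iff)
  thus ?thesis using piL_add[of n \<Lambda> "\<lambda>i j. N i j - \<Lambda> i j"] by simp
qed

lemma step1:
  assumes det: "a * d - b * c = 1" and hol: "\<And>j. hs j holomorphic_on uhp"
    and t: "\<tau> \<in> uhp"
  shows "(deriv ^^ smat n \<Lambda>) (csub (slashs n G k hs ((a, b, c, d), e)) p (piL n \<Lambda>)) \<tau>
    = of_int e powr complex_of_real (- 2 * k) * (\<Sum>M\<in>mats n (sidx n p - 2 * smat n \<Lambda>). wt n (xG G) M * of_int c ^ smat n M *
        (\<Sum>j\<le>smat n \<Lambda>. KK (of_real k + of_nat (sidx n p - 2 * smat n \<Lambda>) - of_nat (smat n M)) c (smat n \<Lambda>) j *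
            (of_int c * \<tau> + of_int d) powr (- (of_real k + of_nat (sidx n p - 2 * smat n \<Lambda>) - of_nat (smat n M)) - of_nat (smat n \<Lambda>) - of_nat j) *
            (deriv ^^ j) (csub hs p (\<lambda>i. piL n \<Lambda> i + piL n M i)) (mob (a, b, c, d) \<tau>)))"
proof (cases "\<forall>i. piL n \<Lambda> i \<le> p i")
  case False
  have "csub hs p (\<lambda>i. piL n \<Lambda> i + piL n M i) = (\<lambda>_. 0)" for M
  proof (rule csub_false)
    from False obtain i where "\<not> piL n \<Lambda> i \<le> p i" by blast
    thus "\<not> (\<forall>i. piL n \<Lambda> i + piL n M i \<le> p i)" by (metis add_leD1)
  qed
  thus ?thesis by (simp add: csub_false[OF False] higher_deriv_const)
next
  case True
  define q where "q = (\<lambda>i. p i - piL n \<Lambda> i)"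
  define E where "E = (of_int e powr complex_of_real (- 2 * k) :: complex)"
  define r where "r = smat n \<Lambda>"
  define \<beta> where "\<beta> = (\<lambda>M. of_real k + of_nat (sidx n q) - of_nat (smat n M) :: complex)"
  define c1 where "c1 = (\<lambda>M. powL n (\<lambda>i j. - of_real pi * \<i> * of_int c * of_real (G i j)) M / factL n M)"
  define F where "F = (\<lambda>M. csub hs q (piL n M))"
  have sq: "sidx n q = sidx n p - 2 * smat n \<Lambda>"
    unfolding q_def by (simp add: sidx_sub[OF True] sidx_piL)
  have hF: "F M holomorphic_on uhp" for M unfolding F_def by (rule csub_holo[of hs, OF hol])
  have hT: "(\<lambda>\<sigma>. (of_int c * \<sigma> + of_int d) powr (- \<beta> M) * F M (mob (a, b, c, d) \<sigma>)) holomorphic_on uhp" for M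
    by (rule slash_term_holo[OF det hF])
  have U: "csub (slashs n G k hs ((a, b, c, d), e)) p (piL n \<Lambda>) =
     (\<lambda>\<sigma>. E * (\<Sum>M\<in>mats n (sidx n q). c1 M * ((of_int c * \<sigma> + of_int d) powr (- \<beta> M) * F M (mob (a, b, c, d) \<sigma>))))"
    unfolding csub_true[OF True] q_def[symmetric]
    by (simp add: slashs_def fun_eq_iff E_def c1_def \<beta>_def F_def mult.assoc del: mob.simps)
  have "(deriv ^^ r) (\<lambda>\<sigma>. E * (\<Sum>M\<in>mats n (sidx n q). c1 M * ((of_int c * \<sigma> + of_int d) powr (- \<beta> M) * F M (mob (a, b, c, d) \<sigma>)))) \<tau>
      = E * (deriv ^^ r) (\<lambda>\<sigma>. \<Sum>M\<in>mats n (sidx n q). c1 M * ((of_int c * \<sigma> + of_int d) powr (- \<beta> M) * F M (mob (a, b, c, d) \<sigma>))) \<tau>"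
    by (rule HD_cmult[OF _ t]) (intro holomorphic_on_sum holomorphic_on_mult[OF holomorphic_on_const hT])
  also have "(deriv ^^ r) (\<lambda>\<sigma>. \<Sum>M\<in>mats n (sidx n q). c1 M * ((of_int c * \<sigma> + of_int d) powr (- \<beta> M) * F M (mob (a, b, c, d) \<sigma>))) \<tau>
      = (\<Sum>M\<in>mats n (sidx n q). (deriv ^^ r) (\<lambda>\<sigma>. c1 M * ((of_int c * \<sigma> + of_int d) powr (- \<beta> M) * F M (mob (a, b, c, d) \<sigma>))) \<tau>)"
    by (rule HD_sum[OF finite_mats _ t]) (intro holomorphic_on_mult[OF holomorphic_on_const hT])
  also have "\<dots> = (\<Sum>M\<in>mats n (sidx n q). c1 M * (\<Sum>j\<le>r. KK (\<beta> M) c r j * (of_int c * \<tau> + of_int d) powr (- \<beta> M - of_nat r - of_nat j) * (deriv ^^ j) (F M) (mob (a, b, c, d) \<tau>)))"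
  proof (rule sum.cong[OF refl])
    fix M
    show "(deriv ^^ r) (\<lambda>\<sigma>. c1 M * ((of_int c * \<sigma> + of_int d) powr (- \<beta> M) * F M (mob (a, b, c, d) \<sigma>))) \<tau>
       = c1 M * (\<Sum>j\<le>r. KK (\<beta> M) c r j * (of_int c * \<tau> + of_int d) powr (- \<beta> M - of_nat r - of_nat j) * (deriv ^^ j) (F M) (mob (a, b, c, d) \<tau>))"
      by (subst HD_cmult[OF hT t]) (simp only: deriv_slash[OF det hF t])
  qed
  finally have main: "(deriv ^^ r) (csub (slashs n G k hs ((a, b, c, d), e)) p (piL n \<Lambda>)) \<tau>
      = E * (\<Sum>M\<in>mats n (sidx n q). c1 M * (\<Sum>j\<le>r. KK (\<beta> M) c r j * (of_int c * \<tau> + of_int d) powr (- \<beta> M - of_nat r - of_nat j) * (deriv ^^ j) (F M) (mob (a, b, c, d) \<tau>)))"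
    unfolding U .
  have c1e: "c1 M = wt n (xG G) M * of_int c ^ smat n M" for M
    unfolding c1_def wt_def powL_scale by simp
  have Fe: "F M = csub hs p (\<lambda>i. piL n \<Lambda> i + piL n M i)" for M
    unfolding F_def q_def by (rule csub_csub[OF True])
  show ?thesis using main unfolding c1e Fe \<beta>_def sq r_def E_def by (simp add: mult.assoc)
qed

lemma step5:
  fixes Z :: complex and Dh :: "nat \<Rightarrow> complex"
  assumes knz: "\<forall>N::nat. k \<noteq> - real N" and S: "S \<le> sp div 2"
  shows "(\<Sum>t\<le>S. of_nat (S choose t) * (ccf k sp t * of_int c ^ (S - t) *
            (\<Sum>j\<le>t. KK (of_real k + of_nat (sp - 2 * t) - of_nat (S - t)) c t j *
               Z powr (- (of_real k + of_nat (sp - 2 * t) - of_nat (S - t)) - of_nat t - of_nat j) * Dh j)))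
     = ccf k sp S * Z powr (- (of_real k + of_nat sp)) * Dh S"
proof -
  define Y where "Y = (\<lambda>j. of_int c ^ (S - j) * Z powr (- (of_real k + of_nat sp) + of_nat (S - j)) * Dh j)"
  define B where "B = (\<lambda>t j. of_nat (S choose t) * of_nat (t choose j) * (-1)^(t-j) * ccf k sp t *
            pochhammer (of_real k + of_nat sp - of_nat S - of_nat (t - j) :: complex) (t - j))"
  have trm: "of_nat (S choose t) * (ccf k sp t * of_int c ^ (S - t) *
            (KK (of_real k + of_nat (sp - 2 * t) - of_nat (S - t)) c t j *
               Z powr (- (of_real k + of_nat (sp - 2 * t) - of_nat (S - t)) - of_nat t - of_nat j) * Dh j))
       = B t j * Y j" if tj: "t \<le> S" "j \<le> t" for t j
  proof -
    have sp2: "2 * t \<le> sp" using tj S by linarith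
    have ex: "- (of_real k + of_nat (sp - 2 * t) - of_nat (S - t)) - of_nat t - of_nat j
        = (- (of_real k + of_nat sp) + of_nat (S - j) :: complex)"
      using sp2 tj by (simp add: of_nat_diff algebra_simps)
    have pa: "of_real k + of_nat (sp - 2 * t) - of_nat (S - t) + of_nat j
        = (of_real k + of_nat sp - of_nat S - of_nat (t - j) :: complex)"
      using sp2 tj by (simp add: of_nat_diff algebra_simps)
    have A: "(- of_int c :: complex) ^ (t - j) = (-1) ^ (t - j) * of_int c ^ (t - j)" by (rule power_minus)
    have e: "S - j = (S - t) + (t - j)" using tj by simp
    have B: "(of_int c :: complex) ^ (S - j) = of_int c ^ (S - t) * of_int c ^ (t - j)" unfolding e power_add ..
    show ?thesis unfolding KK_def ex pa B_def Y_def A B by (simp only: mult_ac)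
  qed
  have "(\<Sum>t\<le>S. of_nat (S choose t) * (ccf k sp t * of_int c ^ (S - t) *
            (\<Sum>j\<le>t. KK (of_real k + of_nat (sp - 2 * t) - of_nat (S - t)) c t j *
               Z powr (- (of_real k + of_nat (sp - 2 * t) - of_nat (S - t)) - of_nat t - of_nat j) * Dh j)))
      = (\<Sum>t\<le>S. \<Sum>j\<le>t. B t j * Y j)"
  proof (rule sum.cong[OF refl])
    fix t assume t: "t \<in> {..S}"
    show "of_nat (S choose t) * (ccf k sp t * of_int c ^ (S - t) *
            (\<Sum>j\<le>t. KK (of_real k + of_nat (sp - 2 * t) - of_nat (S - t)) c t j *
               Z powr (- (of_real k + of_nat (sp - 2 * t) - of_nat (S - t)) - of_nat t - of_nat j) * Dh j))
        = (\<Sum>j\<le>t. B t j * Y j)"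
      unfolding sum_distrib_left by (rule sum.cong[OF refl], rule trm) (use t in auto)
  qed
  also have "\<dots> = (\<Sum>j\<le>S. \<Sum>t\<in>{j..S}. B t j * Y j)" by (rule tri_swap)
  also have "\<dots> = (\<Sum>j\<le>S. (if j = S then ccf k sp S else 0) * Y j)"
  proof (rule sum.cong[OF refl])
    fix j assume j: "j \<in> {..S}"
    have "(\<Sum>t\<in>{j..S}. B t j * Y j) = (\<Sum>t\<in>{j..S}. B t j) * Y j" by (simp add: sum_distrib_right)
    also have "(\<Sum>t\<in>{j..S}. B t j) = (if j = S then ccf k sp S else 0)"
      unfolding B_def by (rule SI[OF knz _ S]) (use j in simp)
    finally show "(\<Sum>t\<in>{j..S}. B t j * Y j) = (if j = S then ccf k sp S else 0) * Y j" .
  qed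
  also have "\<dots> = (\<Sum>j\<le>S. if j = S then ccf k sp S * Y j else 0)"
    by (rule sum.cong[OF refl]) simp
  also have "\<dots> = ccf k sp S * Y S" by (subst sum.delta) auto
  finally show ?thesis by (simp add: Y_def)
qed

lemma reindex_sum:
  fixes \<Phi> :: "(nat \<Rightarrow> nat \<Rightarrow> nat) \<Rightarrow> (nat \<Rightarrow> nat \<Rightarrow> nat) \<Rightarrow> complex"
  assumes van: "\<And>\<Lambda> M. \<not> (\<forall>i. piL n \<Lambda> i + piL n M i \<le> p i) \<Longrightarrow> \<Phi> \<Lambda> M = 0"
  shows "(\<Sum>\<Lambda>\<in>mats n (sidx n p div 2). \<Sum>M\<in>mats n (sidx n p - 2 * smat n \<Lambda>). \<Phi> \<Lambda> M)
       = (\<Sum>N\<in>{N\<in>mats n (sidx n p div 2). \<forall>i. piL n N i \<le> p i}. \<Sum>\<Lambda>\<in>below N. \<Phi> \<Lambda> (\<lambda>i j. N i j - \<Lambda> i j))"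
proof -
  define l where "l = sidx n p div 2"
  define Good where "Good = {N\<in>mats n l. \<forall>i. piL n N i \<le> p i}"
  define Sig1 where "Sig1 = Sigma (mats n l) (\<lambda>\<Lambda>. mats n (sidx n p - 2 * smat n \<Lambda>))"
  define Sig2 where "Sig2 = Sigma Good below"
  define f where "f = (\<lambda>(N :: nat \<Rightarrow> nat \<Rightarrow> nat, \<Lambda> :: nat \<Rightarrow> nat \<Rightarrow> nat). (\<Lambda>, \<lambda>i j. N i j - \<Lambda> i j))"
  have finG: "finite Good" unfolding Good_def by (rule finite_subset[OF _ finite_mats[of n l]]) auto
  have zG: "zout n N" if "N \<in> Good" for N using that zout_mats unfolding Good_def by blast
  have finS1: "finite Sig1" unfolding Sig1_def by (intro finite_SigmaI finite_mats)
  have finS2: "finite Sig2" unfolding Sig2_def using finG finite_below zG by (intro finite_SigmaI) auto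
  have lhs: "(\<Sum>\<Lambda>\<in>mats n l. \<Sum>M\<in>mats n (sidx n p - 2 * smat n \<Lambda>). \<Phi> \<Lambda> M) = (\<Sum>(\<Lambda>, M)\<in>Sig1. \<Phi> \<Lambda> M)"
    unfolding Sig1_def by (rule sum.Sigma) (auto intro: finite_mats)
  have rhs: "(\<Sum>N\<in>Good. \<Sum>\<Lambda>\<in>below N. \<Phi> \<Lambda> (\<lambda>i j. N i j - \<Lambda> i j)) = (\<Sum>(N, \<Lambda>)\<in>Sig2. \<Phi> \<Lambda> (\<lambda>i j. N i j - \<Lambda> i j))"
    unfolding Sig2_def by (rule sum.Sigma) (use finG finite_below zG in auto)
  have inj: "inj_on f Sig2"
  proof (rule inj_onI)
    fix x y assume x: "x \<in> Sig2" and y: "y \<in> Sig2" and fxy: "f x = f y"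
    obtain N \<Lambda> where xe: "x = (N, \<Lambda>)" by (cases x)
    obtain N' \<Lambda>' where ye: "y = (N', \<Lambda>')" by (cases y)
    have L: "\<Lambda> = \<Lambda>'" and D: "(\<lambda>i j. N i j - \<Lambda> i j) = (\<lambda>i j. N' i j - \<Lambda>' i j)"
      using fxy by (auto simp: f_def xe ye)
    have b1: "\<Lambda> i j \<le> N i j" and b2: "\<Lambda> i j \<le> N' i j" for i j
      using x y L by (auto simp: Sig2_def xe ye below_def)
    have "N i j = N' i j" for i j
    proof -
      have "N i j - \<Lambda> i j = N' i j - \<Lambda> i j" using D L by (metis)
      thus ?thesis using b1[of i j] b2[of i j] by linarith
    qed
    thus "x = y" using L by (auto simp: xe ye fun_eq_iff)
  qed
  have sub: "f ` Sig2 \<subseteq> Sig1"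
  proof
    fix y assume "y \<in> f ` Sig2"
    then obtain N \<Lambda> where NG: "N \<in> Good" and LB: "\<Lambda> \<in> below N" and ye: "y = (\<Lambda>, \<lambda>i j. N i j - \<Lambda> i j)"
      by (auto simp: Sig2_def f_def)
    have zN: "zout n N" by (rule zG[OF NG])
    have sN: "smat n N \<le> sidx n p div 2" using NG by (simp add: Good_def smat_le_half)
    have sL: "smat n \<Lambda> \<le> smat n N" by (rule smat_mono[OF LB])
    have "\<Lambda> \<in> mats n l"
      using below_zout[OF zN LB] sL NG by (auto simp: mats_def zout_def Good_def)
    moreover have "(\<lambda>i j. N i j - \<Lambda> i j) \<in> mats n (sidx n p - 2 * smat n \<Lambda>)"
    proof -
      have "zout n (\<lambda>i j. N i j - \<Lambda> i j)" using zN by (simp add: zout_def)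
      moreover have "smat n (\<lambda>i j. N i j - \<Lambda> i j) \<le> sidx n p - 2 * smat n \<Lambda>"
        unfolding smat_diff[OF LB] using sN sL by linarith
      ultimately show ?thesis by (simp add: mats_def zout_def)
    qed
    ultimately show "y \<in> Sig1" by (simp add: Sig1_def ye)
  qed
  have zero: "\<forall>y\<in>Sig1 - f ` Sig2. (\<lambda>(\<Lambda>, M). \<Phi> \<Lambda> M) y = 0"
  proof
    fix y assume y: "y \<in> Sig1 - f ` Sig2"
    obtain \<Lambda> M where ye: "y = (\<Lambda>, M)" by (cases y)
    have LM: "\<Lambda> \<in> mats n l" "M \<in> mats n (sidx n p - 2 * smat n \<Lambda>)" using y by (auto simp: Sig1_def ye)
    show "(\<lambda>(\<Lambda>, M). \<Phi> \<Lambda> M) y = 0"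
    proof (cases "\<forall>i. piL n \<Lambda> i + piL n M i \<le> p i")
      case False thus ?thesis using van by (simp add: ye)
    next
      case True
      define N where "N = (\<lambda>i j. \<Lambda> i j + M i j)"
      have pN: "piL n N = (\<lambda>i. piL n \<Lambda> i + piL n M i)" unfolding N_def by (rule piL_add)
      have "N \<in> Good"
      proof -
        have "zout n N" using zout_mats[OF LM(1)] zout_mats[OF LM(2)] by (simp add: N_def zout_def)
        moreover have "\<forall>i. piL n N i \<le> p i" using True pN by simp
        moreover hence "smat n N \<le> l" unfolding l_def by (rule smat_le_half)
        ultimately show ?thesis by (simp add: Good_def mats_def zout_def)
      qed
      moreover have "\<Lambda> \<in> below N" by (simp add: below_def N_def)
      moreover have "f (N, \<Lambda>) = y" by (simp add: f_def ye N_def)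
      ultimately have "y \<in> f ` Sig2" unfolding Sig2_def by force
      thus ?thesis using y by simp
    qed
  qed
  have "(\<Sum>(\<Lambda>, M)\<in>Sig1. \<Phi> \<Lambda> M) = (\<Sum>(\<Lambda>, M)\<in>f ` Sig2. \<Phi> \<Lambda> M)"
    by (rule sum.mono_neutral_right[OF finS1 sub zero])
  also have "\<dots> = (\<Sum>x\<in>Sig2. (\<lambda>(\<Lambda>, M). \<Phi> \<Lambda> M) (f x))"
    by (rule sum.reindex[OF inj, unfolded comp_def])
  also have "\<dots> = (\<Sum>(N, \<Lambda>)\<in>Sig2. \<Phi> \<Lambda> (\<lambda>i j. N i j - \<Lambda> i j))"
    by (rule sum.cong[OF refl]) (auto simp: f_def)
  finally show ?thesis using lhs rhs unfolding l_def Good_def by simp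
qed

lemma equivariance:
  assumes det: "a * d - b * c = 1" and e: "e = 1 \<or> e = -1" and k2: "\<exists>m::int. k = of_int m / 2"
    and knz: "\<forall>N::nat. k \<noteq> - real N"
    and hol: "\<And>j. hs j holomorphic_on uhp" and t: "\<tau> \<in> uhp"
  shows "Dops n G k p (slashs n G k hs ((a, b, c, d), e)) \<tau> =
     (mp_phi ((a, b, c, d), e) \<tau>) powr (complex_of_real (- 2 * (k + real (sidx n p)))) *
     Dops n G k p hs (mob (a, b, c, d) \<tau>)"
proof -
  define sp where "sp = sidx n p"
  define l where "l = sp div 2"
  define x where "x = xG G"
  define z where "z = of_int c * \<tau> + (of_int d :: complex)"
  define w where "w = mob (a, b, c, d) \<tau>"
  define E where "E = (of_int e powr complex_of_real (- 2 * k) :: complex)"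
  define Dh where "Dh = (\<lambda>j r. (deriv ^^ j) (csub hs p r) w)"
  define Good where "Good = {N\<in>mats n l. \<forall>i. piL n N i \<le> p i}"
  define \<Phi> where "\<Phi> = (\<lambda>\<Lambda> M. wt n x \<Lambda> * ccf k sp (smat n \<Lambda>) * (wt n x M * of_int c ^ smat n M *
        (\<Sum>j\<le>smat n \<Lambda>. KK (of_real k + of_nat (sp - 2 * smat n \<Lambda>) - of_nat (smat n M)) c (smat n \<Lambda>) j *
            z powr (- (of_real k + of_nat (sp - 2 * smat n \<Lambda>) - of_nat (smat n M)) - of_nat (smat n \<Lambda>) - of_nat j) *
            Dh j (\<lambda>i. piL n \<Lambda> i + piL n M i))))"
  define \<psi> where "\<psi> = (\<lambda>N t. ccf k sp t * of_int c ^ (smat n N - t) *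
            (\<Sum>j\<le>t. KK (of_real k + of_nat (sp - 2 * t) - of_nat (smat n N - t)) c t j *
               z powr (- (of_real k + of_nat (sp - 2 * t) - of_nat (smat n N - t)) - of_nat t - of_nat j) * Dh j (piL n N)))"
  have Dh0: "Dh j r = 0" if "\<not> (\<forall>i. r i \<le> p i)" for j r
    unfolding Dh_def csub_false[OF that] by (simp add: higher_deriv_const)
  have "Dops n G k p (slashs n G k hs ((a, b, c, d), e)) \<tau>
     = AA n p * (\<Sum>\<Lambda>\<in>mats n l. wt n x \<Lambda> * ccf k sp (smat n \<Lambda>) * (E * (\<Sum>M\<in>mats n (sp - 2 * smat n \<Lambda>). wt n x M * of_int c ^ smat n M *
        (\<Sum>j\<le>smat n \<Lambda>. KK (of_real k + of_nat (sp - 2 * smat n \<Lambda>) - of_nat (smat n M)) c (smat n \<Lambda>) j *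
            z powr (- (of_real k + of_nat (sp - 2 * smat n \<Lambda>) - of_nat (smat n M)) - of_nat (smat n \<Lambda>) - of_nat j) *
            Dh j (\<lambda>i. piL n \<Lambda> i + piL n M i)))))"
    unfolding Dops_def AA_def sp_def[symmetric] l_def[symmetric] x_def[symmetric]
    by (simp only: step1[OF det hol t] E_def z_def Dh_def w_def sp_def x_def)
  also have "\<dots> = AA n p * E * (\<Sum>\<Lambda>\<in>mats n l. \<Sum>M\<in>mats n (sp - 2 * smat n \<Lambda>). \<Phi> \<Lambda> M)"
    by (simp add: \<Phi>_def sum_distrib_left mult_ac)
  also have "(\<Sum>\<Lambda>\<in>mats n l. \<Sum>M\<in>mats n (sp - 2 * smat n \<Lambda>). \<Phi> \<Lambda> M)
      = (\<Sum>N\<in>Good. \<Sum>\<Lambda>\<in>below N. \<Phi> \<Lambda> (\<lambda>i j. N i j - \<Lambda> i j))"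
    unfolding l_def sp_def Good_def
    by (rule reindex_sum) (simp add: \<Phi>_def Dh0)
  also have "\<dots> = (\<Sum>N\<in>Good. wt n x N * (ccf k sp (smat n N) * z powr (- (of_real k + of_nat sp)) * Dh (smat n N) (piL n N)))"
  proof (rule sum.cong[OF refl])
    fix N assume NG: "N \<in> Good"
    have zN: "zout n N" using NG zout_mats unfolding Good_def by blast
    have sN: "smat n N \<le> sp div 2" using NG unfolding Good_def sp_def by (simp add: smat_le_half)
    have "(\<Sum>\<Lambda>\<in>below N. \<Phi> \<Lambda> (\<lambda>i j. N i j - \<Lambda> i j)) = (\<Sum>\<Lambda>\<in>below N. wt n x \<Lambda> * wt n x (\<lambda>i j. N i j - \<Lambda> i j) * \<psi> N (smat n \<Lambda>))"
    proof (rule sum.cong[OF refl])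
      fix \<Lambda> assume LB: "\<Lambda> \<in> below N"
      show "\<Phi> \<Lambda> (\<lambda>i j. N i j - \<Lambda> i j) = wt n x \<Lambda> * wt n x (\<lambda>i j. N i j - \<Lambda> i j) * \<psi> N (smat n \<Lambda>)"
        unfolding \<Phi>_def \<psi>_def smat_diff[OF LB] piL_split[OF LB] by (simp add: mult_ac)
    qed
    also have "\<dots> = wt n x N * (\<Sum>t\<le>smat n N. of_nat (smat n N choose t) * \<psi> N t)"
      by (rule vander_mat[OF zN])
    also have "(\<Sum>t\<le>smat n N. of_nat (smat n N choose t) * \<psi> N t) = ccf k sp (smat n N) * z powr (- (of_real k + of_nat sp)) * Dh (smat n N) (piL n N)"
      unfolding \<psi>_def by (rule step5[OF knz sN])
    finally show "(\<Sum>\<Lambda>\<in>below N. \<Phi> \<Lambda> (\<lambda>i j. N i j - \<Lambda> i j)) = wt n x N * (ccf k sp (smat n N) * z powr (- (of_real k + of_nat sp)) * Dh (smat n N) (piL n N))" .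
  qed
  finally have lhs: "Dops n G k p (slashs n G k hs ((a, b, c, d), e)) \<tau> =
      AA n p * E * (\<Sum>N\<in>Good. wt n x N * (ccf k sp (smat n N) * z powr (- (of_real k + of_nat sp)) * Dh (smat n N) (piL n N)))" .
  have "Dops n G k p hs w = AA n p * (\<Sum>N\<in>mats n l. wt n x N * ccf k sp (smat n N) * Dh (smat n N) (piL n N))"
    unfolding Dops_def AA_def Dh_def sp_def l_def x_def ..
  also have "(\<Sum>N\<in>mats n l. wt n x N * ccf k sp (smat n N) * Dh (smat n N) (piL n N)) = (\<Sum>N\<in>Good. wt n x N * ccf k sp (smat n N) * Dh (smat n N) (piL n N))"
    by (rule sum.mono_neutral_right[OF finite_mats]) (auto simp: Good_def Dh0)
  finally have rhs: "Dops n G k p hs w = AA n p * (\<Sum>N\<in>Good. wt n x N * ccf k sp (smat n N) * Dh (smat n N) (piL n N))" .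
  have z0: "z \<noteq> 0" unfolding z_def by (rule zden_nz[OF det t])
  have br: "(mp_phi ((a, b, c, d), e) \<tau>) powr (complex_of_real (- 2 * (k + real (sidx n p)))) = E * z powr (- (of_real k + of_nat sp))"
    using branch[OF e z0 k2, of "sidx n p"] by (simp add: z_def E_def sp_def)
  show ?thesis unfolding br lhs w_def[symmetric] rhs
    by (simp add: sum_distrib_left mult_ac)
qed

lemma mv_comp: "(A *v v) $ i = (\<Sum>j\<in>UNIV. A $ i $ j * v $ j)"
  by (simp add: matrix_vector_mult_def)

lemma hol_comp: "hol_vec f uhp \<Longrightarrow> (\<lambda>\<sigma>. f \<sigma> $ i) holomorphic_on uhp"
  by (simp add: hol_vec_def)

lemma Dop_lin:
  assumes hh: "\<And>j. hol_vec (h j) uhp" and hh': "\<And>j. hol_vec (h' j) uhp" and t: "\<tau> \<in> uhp"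
  shows "Dop n G k p (\<lambda>j \<tau>. a *s h j \<tau> + b *s h' j \<tau>) \<tau> = a *s Dop n G k p h \<tau> + b *s Dop n G k p h' \<tau>"
proof (subst vec_eq_iff, intro allI)
  fix i
  have "Dop n G k p (\<lambda>j \<tau>. a *s h j \<tau> + b *s h' j \<tau>) \<tau> $ i = Dops n G k p (\<lambda>j \<sigma>. a * h j \<sigma> $ i + b * h' j \<sigma> $ i) \<tau>"
    by (simp add: Dop_comp)
  also have "\<dots> = a * Dops n G k p (\<lambda>j \<sigma>. h j \<sigma> $ i) \<tau> + b * Dops n G k p (\<lambda>j \<sigma>. h' j \<sigma> $ i) \<tau>"
    by (rule Dops_lin2[OF hol_comp[OF hh] hol_comp[OF hh'] t])
  finally show "Dop n G k p (\<lambda>j \<tau>. a *s h j \<tau> + b *s h' j \<tau>) \<tau> $ i = (a *s Dop n G k p h \<tau> + b *s Dop n G k p h' \<tau>) $ i"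
    by (simp add: Dop_comp)
qed

lemma Dmap_lin:
  assumes hh: "\<And>j. hol_vec (h j) uhp" and hh': "\<And>j. hol_vec (h' j) uhp"
  shows "Dmap n G k (\<lambda>j \<tau>. a *s h j \<tau> + b *s h' j \<tau>) = (\<lambda>p \<tau>. a *s Dmap n G k h p \<tau> + b *s Dmap n G k h' p \<tau>)"
  by (auto simp: Dmap_def fun_eq_iff Dop_lin[OF hh hh'])

lemma lift_cases:
  assumes "is_sl2z_subgroup H" "ge \<in> mp_lift H"
  obtains a b c d e where "ge = ((a, b, c, d), e)" "(a, b, c, d) \<in> H" "e = 1 \<or> e = -1" "a * d - b * c = 1"
proof -
  obtain \<gamma> e where ge: "ge = (\<gamma>, e)" "\<gamma> \<in> H" "e = 1 \<or> e = -1" using assms(2) by (auto simp: mp_lift_def)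
  obtain a b c d where g: "\<gamma> = (a, b, c, d)" by (cases \<gamma>) auto
  have "mat2_det \<gamma> = 1" using assms(1) ge(2) by (simp add: is_sl2z_subgroup_def)
  thus ?thesis using that ge g by simp
qed

lemma Dmap_in_prod:
  assumes sub: "is_sl2z_subgroup H" and k2: "\<exists>m::int. k = of_int m / 2" and knz: "\<forall>N::nat. k \<noteq> - real N"
    and hS: "h \<in> series_space n G k H \<rho>"
  shows "Dmap n G k h \<in> prod_space n k H \<rho>"
proof -
  have hh: "\<And>j. hol_vec (h j) uhp" and tr: "transforms n G k H \<rho> h"
    using hS by (auto simp: series_space_def)
  have hc: "\<And>j i. (\<lambda>\<sigma>. h j \<sigma> $ i) holomorphic_on uhp" using hh hol_comp by blast
  have "Dmap n G k h p \<in> Hol (k + real (sidx n p)) H \<rho>" if p: "p \<in> midx n" for p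
  proof -
    have hv: "hol_vec (Dmap n G k h p) uhp"
      unfolding hol_vec_def
    proof
      fix i
      have "(\<lambda>\<tau>. Dops n G k p (\<lambda>j \<sigma>. h j \<sigma> $ i) \<tau>) holomorphic_on uhp" by (rule Dops_holo[OF hc])
      thus "(\<lambda>\<tau>. Dmap n G k h p \<tau> $ i) holomorphic_on uhp"
        by (rule holomorphic_transform) (simp add: Dmap_def p Dop_comp)
    qed
    have tf: "(mp_phi ge \<tau>) powr (complex_of_real (- 2 * (k + real (sidx n p)))) *s Dmap n G k h p (mob (fst ge) \<tau>) = \<rho> ge *v Dmap n G k h p \<tau>"
      if ge: "ge \<in> mp_lift H" and t: "\<tau> \<in> uhp" for ge \<tau>
    proof -
      obtain a b c d e where gee: "ge = ((a, b, c, d), e)" and gH: "(a, b, c, d) \<in> H" and e: "e = 1 \<or> e = -1"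
        and det: "a * d - b * c = 1" using lift_cases[OF sub ge] by blast
      have mt: "mob (a, b, c, d) \<tau> \<in> uhp" by (rule mob_uhp[OF det t])
      show ?thesis
      proof (subst vec_eq_iff, intro allI)
        fix i
        have "((mp_phi ge \<tau>) powr (complex_of_real (- 2 * (k + real (sidx n p)))) *s Dmap n G k h p (mob (fst ge) \<tau>)) $ i
          = (mp_phi ((a, b, c, d), e) \<tau>) powr (complex_of_real (- 2 * (k + real (sidx n p)))) * Dops n G k p (\<lambda>j \<sigma>. h j \<sigma> $ i) (mob (a, b, c, d) \<tau>)"
          using mt p by (simp add: gee Dmap_def Dop_comp del: mob.simps)
        also have "\<dots> = Dops n G k p (slashs n G k (\<lambda>j \<sigma>. h j \<sigma> $ i) ((a, b, c, d), e)) \<tau>"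
          by (rule equivariance[OF det e k2 knz hc t, symmetric])
        also have "\<dots> = Dops n G k p (\<lambda>q \<sigma>. \<Sum>j\<in>UNIV. \<rho> ge $ i $ j * h q \<sigma> $ j) \<tau>"
        proof (rule Dops_cong[OF p t])
          fix q \<sigma> assume q: "q \<in> midx n" and s: "\<sigma> \<in> uhp"
          have "slashs n G k (\<lambda>j \<sigma>. h j \<sigma> $ i) ((a, b, c, d), e) q \<sigma> = slash_coeff n G k h ge q \<sigma> $ i"
            by (simp add: slash_comp gee)
          also have "\<dots> = (\<rho> ge *v h q \<sigma>) $ i" using tr ge q s by (simp add: transforms_def)
          finally show "slashs n G k (\<lambda>j \<sigma>. h j \<sigma> $ i) ((a, b, c, d), e) q \<sigma> = (\<Sum>j\<in>UNIV. \<rho> ge $ i $ j * h q \<sigma> $ j)"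
            by (simp add: mv_comp)
        qed
        also have "\<dots> = (\<Sum>j\<in>UNIV. \<rho> ge $ i $ j * Dops n G k p (\<lambda>q \<sigma>. h q \<sigma> $ j) \<tau>)"
          by (rule Dops_sum[OF finite _ t]) (rule hc)
        also have "\<dots> = (\<rho> ge *v Dmap n G k h p \<tau>) $ i"
          using p t by (simp add: mv_comp Dmap_def Dop_comp)
        finally show "((mp_phi ge \<tau>) powr (complex_of_real (- 2 * (k + real (sidx n p)))) *s Dmap n G k h p (mob (fst ge) \<tau>)) $ i
           = (\<rho> ge *v Dmap n G k h p \<tau>) $ i" .
      qed
    qed
    show ?thesis unfolding Hol_def using hv tf by (auto simp: Dmap_def)
  qed
  thus ?thesis by (auto simp: prod_space_def Dmap_def fun_eq_iff)
qed

lemma Dmap_inj: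
  assumes knz: "\<forall>N::nat. k \<noteq> - real N"
    and hS: "h \<in> series_space n G k H \<rho>" and hS': "h' \<in> series_space n G k H \<rho>"
    and eq: "Dmap n G k h = Dmap n G k h'"
  shows "h = h'"
proof (intro ext)
  fix j \<tau>
  have hh: "\<And>j. hol_vec (h j) uhp" and hh': "\<And>j. hol_vec (h' j) uhp"
    using hS hS' by (auto simp: series_space_def)
  show "h j \<tau> = h' j \<tau>"
  proof (cases "j \<in> midx n \<and> \<tau> \<in> uhp")
    case False
    thus ?thesis using hS hS' by (auto simp: series_space_def)
  next
    case True
    show ?thesis
    proof (subst vec_eq_iff, intro allI)
      fix i
      define ws where "ws = (\<lambda>j \<sigma>. 1 * h j \<sigma> $ i + (-1) * h' j \<sigma> $ i)"
      have "Dops n G k q ws \<sigma> = 0" if q: "q \<in> midx n" and s: "\<sigma> \<in> uhp" for q \<sigma>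
      proof -
        have "Dops n G k q ws \<sigma> = 1 * Dops n G k q (\<lambda>j \<sigma>. h j \<sigma> $ i) \<sigma> + (-1) * Dops n G k q (\<lambda>j \<sigma>. h' j \<sigma> $ i) \<sigma>"
          unfolding ws_def by (rule Dops_lin2[OF hol_comp[OF hh] hol_comp[OF hh'] s])
        also have "\<dots> = (Dmap n G k h q \<sigma> - Dmap n G k h' q \<sigma>) $ i"
          using q s by (simp add: Dmap_def Dop_comp)
        finally show ?thesis using eq by simp
      qed
      hence "ws j \<tau> = 0" using Dops_inj[OF knz, of n G ws j \<tau>] True by blast
      thus "h j \<tau> $ i = h' j \<tau> $ i" by (simp add: ws_def)
    qed
  qed
qed

lemma Dmap_surj:
  assumes sub: "is_sl2z_subgroup H" and k2: "\<exists>m::int. k = of_int m / 2" and knz: "\<forall>N::nat. k \<noteq> - real N"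
    and gP: "g \<in> prod_space n k H \<rho>"
  shows "\<exists>h\<in>series_space n G k H \<rho>. Dmap n G k h = g"
proof -
  define gs where "gs = (\<lambda>i p \<tau>. g p \<tau> $ i)"
  define h where "h = (\<lambda>j \<tau>. \<chi> i. hsol n G k (gs i) j \<tau>)"
  have comp: "(\<lambda>j \<sigma>. h j \<sigma> $ i) = hsol n G k (gs i)" for i by (simp add: h_def fun_eq_iff)
  have gHol: "g p \<in> Hol (k + real (sidx n p)) H \<rho>" if "p \<in> midx n" for p using gP that by (simp add: prod_space_def)
  have gsh: "gs i p holomorphic_on uhp" if "p \<in> midx n" for i p
    using gHol[OF that] unfolding gs_def Hol_def hol_vec_def by auto
  have hsh: "hsol n G k (gs i) j holomorphic_on uhp" for i j by (rule hsol_holo[OF gsh])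
  have hh: "hol_vec (h j) uhp" for j unfolding hol_vec_def h_def using hsh by simp
  have hout: "h j \<tau> = 0" if "j \<notin> midx n \<or> \<tau> \<notin> uhp" for j \<tau>
    using that by (simp add: h_def hsol_out vec_eq_iff)
  have hD: "Dops n G k p (hsol n G k (gs i)) \<tau> = g p \<tau> $ i" if "p \<in> midx n" "\<tau> \<in> uhp" for p \<tau> i
    using hsol_D[OF knz that] by (simp add: gs_def)
  have tr: "transforms n G k H \<rho> h"
    unfolding transforms_def
  proof (intro ballI)
    fix ge p \<tau> assume ge: "ge \<in> mp_lift H" and p: "p \<in> midx n" and t: "\<tau> \<in> uhp"
    obtain a b c d e where gee: "ge = ((a, b, c, d), e)" and gH: "(a, b, c, d) \<in> H" and e: "e = 1 \<or> e = -1"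
      and det: "a * d - b * c = 1" using lift_cases[OF sub ge] by blast
    show "slash_coeff n G k h ge p \<tau> = \<rho> ge *v h p \<tau>"
    proof (subst vec_eq_iff, intro allI)
      fix i
      define ws where "ws = (\<lambda>q \<sigma>. 1 * slashs n G k (hsol n G k (gs i)) ge q \<sigma> + (-1) * (\<Sum>j\<in>UNIV. \<rho> ge $ i $ j * hsol n G k (gs j) q \<sigma>))"
      have "Dops n G k q ws \<sigma> = 0" if q: "q \<in> midx n" and s: "\<sigma> \<in> uhp" for q \<sigma>
      proof -
        have ms: "mob (a, b, c, d) \<sigma> \<in> uhp" by (rule mob_uhp[OF det s])
        have h1: "\<And>j. slashs n G k (hsol n G k (gs i)) ge j holomorphic_on uhp"
          unfolding gee by (rule slashs_holo[OF det hsh])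
        have h2: "\<And>q. (\<lambda>\<sigma>. \<Sum>j\<in>UNIV. \<rho> ge $ i $ j * hsol n G k (gs j) q \<sigma>) holomorphic_on uhp"
          using hsh by (intro holomorphic_intros) auto
        have "Dops n G k q ws \<sigma> = 1 * Dops n G k q (slashs n G k (hsol n G k (gs i)) ge) \<sigma>
               + (-1) * Dops n G k q (\<lambda>q \<sigma>. \<Sum>j\<in>UNIV. \<rho> ge $ i $ j * hsol n G k (gs j) q \<sigma>) \<sigma>"
          unfolding ws_def by (rule Dops_lin2[OF h1 h2 s])
        also have "Dops n G k q (\<lambda>q \<sigma>. \<Sum>j\<in>UNIV. \<rho> ge $ i $ j * hsol n G k (gs j) q \<sigma>) \<sigma>
            = (\<Sum>j\<in>UNIV. \<rho> ge $ i $ j * Dops n G k q (hsol n G k (gs j)) \<sigma>)"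
          by (rule Dops_sum[OF finite _ s]) (rule hsh)
        also have "\<dots> = (\<rho> ge *v g q \<sigma>) $ i" using hD[OF q s] by (simp add: mv_comp)
        also have "Dops n G k q (slashs n G k (hsol n G k (gs i)) ge) \<sigma>
            = (mp_phi ge \<sigma>) powr (complex_of_real (- 2 * (k + real (sidx n q)))) * Dops n G k q (hsol n G k (gs i)) (mob (a, b, c, d) \<sigma>)"
          unfolding gee by (rule equivariance[OF det e k2 knz hsh s])
        also have "\<dots> = ((mp_phi ge \<sigma>) powr (complex_of_real (- 2 * (k + real (sidx n q)))) *s g q (mob (fst ge) \<sigma>)) $ i"
          using hD[OF q ms] by (simp add: gee del: mob.simps)
        also have "(mp_phi ge \<sigma>) powr (complex_of_real (- 2 * (k + real (sidx n q)))) *s g q (mob (fst ge) \<sigma>) = \<rho> ge *v g q \<sigma>"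
          using gHol[OF q] ge s unfolding Hol_def by blast
        finally show ?thesis by simp
      qed
      hence "ws p \<tau> = 0" using Dops_inj[OF knz, of n G ws p \<tau>] p t by blast
      hence "slashs n G k (hsol n G k (gs i)) ge p \<tau> = (\<Sum>j\<in>UNIV. \<rho> ge $ i $ j * hsol n G k (gs j) p \<tau>)"
        by (simp add: ws_def)
      thus "slash_coeff n G k h ge p \<tau> $ i = (\<rho> ge *v h p \<tau>) $ i"
        by (simp add: slash_comp comp mv_comp h_def)
    qed
  qed
  have hS: "h \<in> series_space n G k H \<rho>"
    unfolding series_space_def using hh hout tr by (auto simp: fun_eq_iff)
  have "Dmap n G k h = g"
  proof (intro ext)
    fix p \<tau>
    show "Dmap n G k h p \<tau> = g p \<tau>"
    proof (cases "p \<in> midx n \<and> \<tau> \<in> uhp")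
      case True
      show ?thesis
      proof (subst vec_eq_iff, intro allI)
        fix i show "Dmap n G k h p \<tau> $ i = g p \<tau> $ i"
          using True hD[of p \<tau> i] by (simp add: Dmap_def Dop_comp comp)
      qed
    next
      case False
      have "g p \<tau> = 0"
      proof (cases "p \<in> midx n")
        case True
        hence "\<tau> \<notin> uhp" using False by simp
        thus ?thesis using gHol[OF True] by (simp add: Hol_def)
      next
        case False thus ?thesis using gP by (simp add: prod_space_def)
      qed
      moreover have "Dmap n G k h p \<tau> = 0" unfolding Dmap_def by (simp only: if_not_P[OF False])
      ultimately show ?thesis by simp
    qed
  qed
  thus ?thesis using hS by blast
qed

theorem proposition4p15:
  fixes n :: nat and G :: "nat \<Rightarrow> nat \<Rightarrow> real" and k :: real
    and H :: "mat2 set" and \<rho> :: "mpel \<Rightarrow> complex^'m^'m"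
  assumes "is_sl2z_subgroup H"
    and "is_rep H \<rho>"
    and "\<forall>i<n. \<forall>j<n. G i j = G j i"
    and "\<exists>m::int. k = of_int m / 2"
    and "\<forall>N::nat. k \<noteq> - real N"
  shows "(\<forall>h\<in>series_space n G k H \<rho>. \<forall>h'\<in>series_space n G k H \<rho>. \<forall>a b :: complex.
            Dmap n G k (\<lambda>j \<tau>. a *s h j \<tau> + b *s h' j \<tau>) =
            (\<lambda>p \<tau>. a *s Dmap n G k h p \<tau> + b *s Dmap n G k h' p \<tau>))
         \<and> bij_betw (Dmap n G k) (series_space n G k H \<rho>) (prod_space n k H \<rho>)"
proof (intro conjI ballI allI)
  fix h h' a b assume "h \<in> series_space n G k H \<rho>" "h' \<in> series_space n G k H \<rho>"
  thus "Dmap n G k (\<lambda>j \<tau>. a *s h j \<tau> + b *s h' j \<tau>) = (\<lambda>p \<tau>. a *s Dmap n G k h p \<tau> + b *s Dmap n G k h' p \<tau>)"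
    by (intro Dmap_lin) (auto simp: series_space_def)
next
  show "bij_betw (Dmap n G k) (series_space n G k H \<rho>) (prod_space n k H \<rho>)"
    unfolding bij_betw_def
  proof (intro conjI)
    show "inj_on (Dmap n G k) (series_space n G k H \<rho>)"
      by (rule inj_onI) (rule Dmap_inj[OF assms(5)])
    show "Dmap n G k ` series_space n G k H \<rho> = prod_space n k H \<rho>"
    proof (intro equalityI subsetI)
      fix y assume "y \<in> Dmap n G k ` series_space n G k H \<rho>"
      then obtain h where h: "h \<in> series_space n G k H \<rho>" and y: "y = Dmap n G k h" by blast
      show "y \<in> prod_space n k H \<rho>" unfolding y by (rule Dmap_in_prod[OF assms(1) assms(4) assms(5) h])
    next
      fix g assume g: "g \<in> prod_space n k H \<rho>"
      obtain h where h: "h \<in> series_space n G k H \<rho>" and e: "Dmap n G k h = g"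
        using Dmap_surj[OF assms(1) assms(4) assms(5) g] by blast
      show "g \<in> Dmap n G k ` series_space n G k H \<rho>" using h e by blast
    qed
  qed
qed

end
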